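(* Let $K$ be any real cubic number field. For $(i,j),(k,l)\in Ind$, let $\theta(i,j)$ denote the unique element of $\{0,1,2\}\setminus\{i,j\}$. If $(k,l)\neq(i,\theta(i,j))$ and $(k,l)\neq(\theta(i,j),i)$, then there exists $(\alpha,\beta)\in\Delta_K$ such that $\varepsilon_K(\alpha,\beta)=(i,j)$ and $\varepsilon_K(T_K(\alpha,\beta))=(k,l)$.
   Context: Let $K\subset\mathbb{R}$ be a real cubic number field, $N=N_{K/\mathbb{Q}}$ its norm. Fix $r=p/q$ with $p,q$ positive coprime integers and $3\nmid p$. Let $\Delta_K=\{(\alpha,\beta)\in K^2:\ 1,\alpha,\beta \text{ linearly independent over }\mathbb{Q},\ \alpha,\beta>0,\ \alpha+\beta<1\}$ and $Ind=\{(i,j): i,j\in\{0,1,2\},\ i\neq j\}$. Let $\Delta=\{(x,y)\in\mathbb{R}^2: x,y\ge 0,\ x+y\le 1\}$ and $\triangle(1,2)=\{(x,y)\in\Delta: x\ge y\}$, $\triangle(2,1)=\{x\le y\}$, $\triangle(0,1)=\{2x+y-1\le 0\}$, $\triangle(1,0)=\{2x+y-1\ge 0\}$, $\triangle(0,2)=\{x+2y-1\le0\}$, $\triangle(2,0)=\{x+2y-1\ge 0\}$ (all subsets of $\Delta$). Maps $T_{(i,j)}:\triangle(i,j)\to\Delta$: $T_{(1,2)}(x,y)=(\frac{x-y}{1-y},\frac{y}{1-y})$, $T_{(2,1)}(x,y)=(\frac{x}{1-x},\frac{y-x}{1-x})$, $T_{(0,1)}(x,y)=(\frac{x}{1-x},\frac{y}{1-x})$,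 $T_{(1,0)}(x,y)=(\frac{2x+y-1}{x+y},\frac{y}{x+y})$, $T_{(0,2)}(x,y)=(\frac{x}{1-y},\frac{y}{1-y})$, $T_{(2,0)}(x,y)=(\frac{x}{x+y},\frac{x+2y-1}{x+y})$. For $(\alpha,\beta)\in\Delta_K$ put $\gamma=1-\alpha-\beta$ and $v_{\{1,2\}}=\frac{\alpha^r\beta^r}{|N(\alpha)N(\beta)|}$, $v_{\{0,1\}}=\frac{\alpha^r\gamma^r}{|N(\alpha)N(\gamma)|}$, $v_{\{0,2\}}=\frac{\beta^r\gamma^r}{|N(\beta)N(\gamma)|}$; the maximum is attained at a unique pair $\{i_0,j_0\}$. $\varepsilon_K(\alpha,\beta)$ is the ordered pair $(i,j)\in Ind$ with $\{i,j\}=\{i_0,j_0\}$ and $(\alpha,\beta)\in\triangle(i,j)$, and $T_K(\alpha,\beta)=T_{\varepsilon_K(\alpha,\beta)}(\alpha,\beta)$ (a map $\Delta_K\to\Delta_K$). *)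

theory Defs
  imports Complex_Main
begin

definition subfield_real :: "real set \<Rightarrow> bool" where
  "subfield_real K \<longleftrightarrow> 0 \<in> K \<and> 1 \<in> K \<and>
     (\<forall>x\<in>K. \<forall>y\<in>K. x + y \<in> K \<and> x * y \<in> K) \<and>
     (\<forall>x\<in>K. - x \<in> K) \<and> (\<forall>x\<in>K. x \<noteq> 0 \<longrightarrow> inverse x \<in> K)"

definition Q_lin_indep3 :: "real \<Rightarrow> real \<Rightarrow> real \<Rightarrow> bool" where
  "Q_lin_indep3 a b c \<longleftrightarrow>
     (\<forall>x\<in>\<rat>. \<forall>y\<in>\<rat>. \<forall>z\<in>\<rat>. x * a + y * b + z * c = 0 \<longrightarrow> x = 0 \<and> y = 0 \<and> z = 0)"

definition real_cubic_field :: "real set \<Rightarrow> bool" where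
  "real_cubic_field K \<longleftrightarrow> subfield_real K \<and>
     (\<exists>b1\<in>K. \<exists>b2\<in>K. \<exists>b3\<in>K. Q_lin_indep3 b1 b2 b3 \<and>
        K = {x * b1 + y * b2 + z * b3 | x y z. x \<in> \<rat> \<and> y \<in> \<rat> \<and> z \<in> \<rat>})"

definition embeddings :: "real set \<Rightarrow> (real \<Rightarrow> complex) set" where
  "embeddings K = {\<sigma>. \<sigma> 1 = 1 \<and>
      (\<forall>x\<in>K. \<forall>y\<in>K. \<sigma> (x + y) = \<sigma> x + \<sigma> y \<and> \<sigma> (x * y) = \<sigma> x * \<sigma> y) \<and>
      (\<forall>x. x \<notin> K \<longrightarrow> \<sigma> x = 0)}"

definition field_norm :: "real set \<Rightarrow> real \<Rightarrow> complex" where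
  "field_norm K a = (\<Prod>\<sigma>\<in>embeddings K. \<sigma> a)"

definition Ind :: "(nat \<times> nat) set" where
  "Ind = {(i, j). i < 3 \<and> j < 3 \<and> i \<noteq> j}"

definition theta :: "nat \<Rightarrow> nat \<Rightarrow> nat" where
  "theta i j = 3 - i - j"

definition Delta_K :: "real set \<Rightarrow> (real \<times> real) set" where
  "Delta_K K = {(a, b). a \<in> K \<and> b \<in> K \<and> Q_lin_indep3 1 a b \<and> a > 0 \<and> b > 0 \<and> a + b < 1}"

definition Delta :: "(real \<times> real) set" where
  "Delta = {(x, y). x \<ge> 0 \<and> y \<ge> 0 \<and> x + y \<le> 1}"

definition tri :: "nat \<times> nat \<Rightarrow> (real \<times> real) set" where
  "tri ij = {(x, y) \<in> Delta.
      (if ij = (1, 2) then x \<ge> y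
       else if ij = (2, 1) then x \<le> y
       else if ij = (0, 1) then 2 * x + y - 1 \<le> 0
       else if ij = (1, 0) then 2 * x + y - 1 \<ge> 0
       else if ij = (0, 2) then x + 2 * y - 1 \<le> 0
       else x + 2 * y - 1 \<ge> 0)}"

definition Tmap :: "nat \<times> nat \<Rightarrow> real \<times> real \<Rightarrow> real \<times> real" where
  "Tmap ij p = (case p of (x, y) \<Rightarrow>
      (if ij = (1, 2) then ((x - y) / (1 - y), y / (1 - y))
       else if ij = (2, 1) then (x / (1 - x), (y - x) / (1 - x))
       else if ij = (0, 1) then (x / (1 - x), y / (1 - x))
       else if ij = (1, 0) then ((2 * x + y - 1) / (x + y), y / (x + y))
       else if ij = (0, 2) then (x / (1 - y), y / (1 - y))
       else (x / (x + y), (x + 2 * y - 1) / (x + y))))"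

text \<open>Coordinates: index 0 is gamma = 1 - alpha - beta, index 1 is alpha, index 2 is beta.\<close>
definition coord :: "real \<Rightarrow> real \<Rightarrow> nat \<Rightarrow> real" where
  "coord a b i = (if i = 0 then 1 - a - b else if i = 1 then a else b)"

definition vval :: "real set \<Rightarrow> real \<Rightarrow> real \<Rightarrow> real \<Rightarrow> nat \<Rightarrow> nat \<Rightarrow> real" where
  "vval K r a b i j =
     (coord a b i powr r * coord a b j powr r) /
     (cmod (field_norm K (coord a b i)) * cmod (field_norm K (coord a b j)))"

text \<open>\<open>eps_is K r a b (i,j)\<close> says \<open>\<epsilon>_K(a,b) = (i,j)\<close>: the maximum of the three values v is
  attained (uniquely) at the pair {i,j}, and (a,b) lies in the triangle for (i,j).\<close>
definition eps_is :: "real set \<Rightarrow> real \<Rightarrow> real \<Rightarrow> real \<Rightarrow> nat \<times> nat \<Rightarrow> bool" where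
  "eps_is K r a b ij \<longleftrightarrow> ij \<in> Ind \<and>
     (\<forall>(k, l)\<in>Ind. {k, l} \<noteq> {fst ij, snd ij} \<longrightarrow> vval K r a b k l < vval K r a b (fst ij) (snd ij)) \<and>
     (a, b) \<in> tri ij"

end

theory Submission
  imports Defs
begin


lemma sub_facts:
  assumes "subfield_real K"
  shows "0 \<in> K" "1 \<in> K" "\<And>x y. x \<in> K \<Longrightarrow> y \<in> K \<Longrightarrow> x + y \<in> K"
    "\<And>x y. x \<in> K \<Longrightarrow> y \<in> K \<Longrightarrow> x * y \<in> K"
    "\<And>x. x \<in> K \<Longrightarrow> - x \<in> K" "\<And>x. x \<in> K \<Longrightarrow> inverse x \<in> K"
  using assms unfolding subfield_real_def by (auto simp: inverse_eq_divide)

lemma sub_diff: "subfield_real K \<Longrightarrow> x \<in> K \<Longrightarrow> y \<in> K \<Longrightarrow> x - y \<in> K"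
  using sub_facts[of K] by (metis diff_conv_add_uminus)

lemma sub_div: "subfield_real K \<Longrightarrow> x \<in> K \<Longrightarrow> y \<in> K \<Longrightarrow> x / y \<in> K"
  using sub_facts[of K] by (metis divide_inverse inverse_zero)

lemma sub_nat: "subfield_real K \<Longrightarrow> real n \<in> K"
  by (induction n) (auto intro: sub_facts simp: add.commute)

lemma sub_int: "subfield_real K \<Longrightarrow> real_of_int n \<in> K"
proof (cases "n \<ge> 0")
  case True
  assume "subfield_real K"
  then show ?thesis using True sub_nat[of K "nat n"] by simp
next
  case False
  assume s: "subfield_real K"
  then have "- real (nat (-n)) \<in> K" using sub_nat[of K "nat (-n)"] sub_facts(5)[OF s] by blast
  then show ?thesis using False by simp
qed

lemma sub_rats: assumes "subfield_real K" "x \<in> \<rat>" shows "x \<in> K"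
proof -
  obtain a b where "x = real_of_int a / real_of_int b" using assms(2) by (metis Rats_cases' )
  then show ?thesis using sub_div[OF assms(1) sub_int[OF assms(1)] sub_int[OF assms(1)]] by simp
qed



interpretation qv: vector_space "\<lambda>(q::rat) (x::real). real_of_rat q * x"
  by unfold_locales (auto simp: algebra_simps of_rat_add of_rat_mult)

lemma qbound:
  assumes "finite T" "finite S"
   and indep: "\<And>f. (\<Sum>x\<in>S. real_of_rat (f x) * x) = 0 \<Longrightarrow> \<forall>x\<in>S. f x = 0"
   and sp: "\<And>x. x\<in>S \<Longrightarrow> \<exists>g. x = (\<Sum>t\<in>T. real_of_rat (g t) * t)"
  shows "card S \<le> card T"
proof -
  have "qv.independent S"
    by (rule qv.independent_if_scalars_zero) (use assms in auto)
  moreover have "S \<subseteq> qv.span T" using sp qv.span_finite[OF assms(1)] by auto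
  ultimately show ?thesis using qv.independent_span_bound[OF assms(1)] by auto
qed

lemma dep_gen:
  fixes v :: "nat \<Rightarrow> real"
  assumes "finite T" "card T < n"
    and sp: "\<And>k. k < n \<Longrightarrow> \<exists>g. v k = (\<Sum>t\<in>T. real_of_rat (g t) * t)"
  shows "\<exists>c. (\<forall>k<n. c k \<in> \<rat>) \<and> (\<exists>k<n. c k \<noteq> 0) \<and> (\<Sum>k<n. c k * v k) = 0"
proof (rule ccontr)
  assume nd: "\<not> ?thesis"
  have inj: "inj_on v {..<n}"
  proof (rule inj_onI, rule ccontr)
    fix a b assume ab: "a \<in> {..<n}" "b \<in> {..<n}" "v a = v b" "a \<noteq> b"
    define c where "c = (\<lambda>k. if k = a then 1 else if k = b then -1 else (0::real))"
    have "(\<Sum>k<n. c k * v k) = (\<Sum>k\<in>{a,b}. c k * v k)"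
      by (rule sum.mono_neutral_right) (use ab in \<open>auto simp: c_def\<close>)
    also have "\<dots> = 0" using ab by (simp add: c_def)
    finally have "(\<Sum>k<n. c k * v k) = 0" .
    moreover have "\<forall>k<n. c k \<in> \<rat>" by (auto simp: c_def)
    moreover have "c a \<noteq> 0" "a < n" using ab by (auto simp: c_def)
    ultimately show False using nd by blast
  qed
  define S where "S = v ` {..<n}"
  have cS: "card S = n" using inj by (simp add: S_def card_image)
  have "card S \<le> card T"
  proof (rule qbound[OF assms(1)])
    show "finite S" by (simp add: S_def)
    show "\<exists>g. x = (\<Sum>t\<in>T. real_of_rat (g t) * t)" if "x \<in> S" for x
      using that sp by (auto simp: S_def)
    fix f assume h: "(\<Sum>x\<in>S. real_of_rat (f x) * x) = 0"
    define c where "c = (\<lambda>k. real_of_rat (f (v k)))"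
    have "(\<Sum>k<n. c k * v k) = (\<Sum>x\<in>S. real_of_rat (f x) * x)"
      unfolding S_def c_def by (simp add: sum.reindex[OF inj])
    with h have "(\<Sum>k<n. c k * v k) = 0" by simp
    moreover have "\<forall>k<n. c k \<in> \<rat>" by (auto simp: c_def)
    ultimately have "\<forall>k<n. c k = 0" using nd by blast
    then show "\<forall>x\<in>S. f x = 0" by (auto simp: S_def c_def)
  qed
  with cS assms(2) show False by simp
qed

lemma rat_ex: "x \<in> \<rat> \<Longrightarrow> \<exists>q. x = real_of_rat q"
  by (auto elim: Rats_cases)

lemma span3_ex:
  assumes "b1 \<noteq> b2" "b1 \<noteq> b3" "b2 \<noteq> b3" "x1 \<in> \<rat>" "x2 \<in> \<rat>" "x3 \<in> \<rat>"
  shows "\<exists>g. x1 * b1 + x2 * b2 + x3 * b3 = (\<Sum>t\<in>{b1,b2,b3}. real_of_rat (g t) * t)"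
proof -
  obtain q1 where q1: "x1 = real_of_rat q1" using assms(4) rat_ex by blast
  obtain q2 where q2: "x2 = real_of_rat q2" using assms(5) rat_ex by blast
  obtain q3 where q3: "x3 = real_of_rat q3" using assms(6) rat_ex by blast
  define g where "g = (\<lambda>t. if t = b1 then q1 else if t = b2 then q2 else q3)"
  have "(\<Sum>t\<in>{b1,b2,b3}. real_of_rat (g t) * t) = x1 * b1 + x2 * b2 + x3 * b3"
    using assms(1-3) by (simp add: g_def q1 q2 q3)
  then show ?thesis by metis
qed

lemma span2_ex:
  assumes "b1 \<noteq> b2" "x1 \<in> \<rat>" "x2 \<in> \<rat>"
  shows "\<exists>g. x1 * b1 + x2 * b2 = (\<Sum>t\<in>{b1,b2}. real_of_rat (g t) * t)"
proof -
  obtain q1 where q1: "x1 = real_of_rat q1" using assms(2) rat_ex by blast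
  obtain q2 where q2: "x2 = real_of_rat q2" using assms(3) rat_ex by blast
  define g where "g = (\<lambda>t. if t = b1 then q1 else q2)"
  have "(\<Sum>t\<in>{b1,b2}. real_of_rat (g t) * t) = x1 * b1 + x2 * b2"
    using assms(1) by (simp add: g_def q1 q2)
  then show ?thesis by metis
qed

lemma sum4: "(\<Sum>k<(4::nat). c k * v k) = c 0 * v 0 + c 1 * v 1 + c 2 * v 2 + c 3 * (v 3 :: real)"
  by (simp add: numeral_eq_Suc lessThan_Suc)
lemma sum3: "(\<Sum>k<(3::nat). c k * v k) = c 0 * v 0 + c 1 * v 1 + c 2 * (v 2 :: real)"
  by (simp add: numeral_eq_Suc lessThan_Suc)

lemma indep3_distinct:
  assumes "Q_lin_indep3 a b c" shows "a \<noteq> b" "a \<noteq> c" "b \<noteq> c" "a \<noteq> 0" "b \<noteq> 0" "c \<noteq> 0"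
proof -
  have R: "(1::real) \<in> \<rat>" "(-1::real) \<in> \<rat>" "(0::real) \<in> \<rat>" by auto
  note d = assms[unfolded Q_lin_indep3_def, rule_format]
  show "a \<noteq> b" using d[OF R(1) R(2) R(3)] by auto
  show "a \<noteq> c" using d[OF R(1) R(3) R(2)] by auto
  show "b \<noteq> c" using d[OF R(3) R(1) R(2)] by auto
  show "a \<noteq> 0" using d[OF R(1) R(3) R(3)] by auto
  show "b \<noteq> 0" using d[OF R(3) R(1) R(3)] by auto
  show "c \<noteq> 0" using d[OF R(3) R(3) R(1)] by auto
qed

lemma four_dep:
  assumes K: "real_cubic_field K" and v: "v1 \<in> K" "v2 \<in> K" "v3 \<in> K" "v4 \<in> K"
  shows "\<exists>c1 c2 c3 c4. c1 \<in> \<rat> \<and> c2 \<in> \<rat> \<and> c3 \<in> \<rat> \<and> c4 \<in> \<rat> \<and>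
     (c1 \<noteq> 0 \<or> c2 \<noteq> 0 \<or> c3 \<noteq> 0 \<or> c4 \<noteq> 0) \<and> c1 * v1 + c2 * v2 + c3 * v3 + c4 * v4 = 0"
proof -
  obtain b1 b2 b3 where b: "Q_lin_indep3 b1 b2 b3"
    "K = {x * b1 + y * b2 + z * b3 | x y z. x \<in> \<rat> \<and> y \<in> \<rat> \<and> z \<in> \<rat>}"
    using K unfolding real_cubic_field_def by blast
  note dd = indep3_distinct[OF b(1)]
  define v where "v = (\<lambda>k::nat. if k = 0 then v1 else if k = 1 then v2 else if k = 2 then v3 else v4)"
  have "\<exists>c. (\<forall>k<4. c k \<in> \<rat>) \<and> (\<exists>k<4. c k \<noteq> 0) \<and> (\<Sum>k<(4::nat). c k * v k) = 0"
  proof (rule dep_gen[where T = "{b1,b2,b3}"])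
    show "card {b1, b2, b3} < 4" by (simp add: card_insert_if)
    fix k assume "k < (4::nat)"
    then have "v k \<in> K" using v by (auto simp: v_def)
    then obtain x y z where "v k = x * b1 + y * b2 + z * b3" "x \<in> \<rat>" "y \<in> \<rat>" "z \<in> \<rat>"
      using b(2) by blast
    then show "\<exists>g. v k = (\<Sum>t\<in>{b1, b2, b3}. real_of_rat (g t) * t)"
      using span3_ex[OF dd(1-3)] by metis
  qed simp
  then obtain c where c: "\<forall>k<4. c k \<in> \<rat>" "\<exists>k<4. c k \<noteq> 0" "(\<Sum>k<(4::nat). c k * v k) = 0" by blast
  have "\<exists>k<4. c k \<noteq> 0 \<Longrightarrow> c 0 \<noteq> 0 \<or> c 1 \<noteq> 0 \<or> c 2 \<noteq> 0 \<or> c 3 \<noteq> 0"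
    by (auto simp: numeral_eq_Suc less_Suc_eq)
  with c show ?thesis unfolding sum4 by (intro exI[of _ "c 0"] exI[of _ "c 1"] exI[of _ "c 2"] exI[of _ "c 3"]) (auto simp: v_def)
qed



lemma cubic_sub: "real_cubic_field K \<Longrightarrow> subfield_real K"
  by (simp add: real_cubic_field_def)

lemma basis_in:
  assumes "K = {x * b1 + y * b2 + z * b3 | x y z. x \<in> \<rat> \<and> y \<in> \<rat> \<and> z \<in> \<rat>}"
  shows "b1 \<in> K" "b2 \<in> K" "b3 \<in> K"
proof -
  show "b1 \<in> K" unfolding assms mem_Collect_eq
    by (rule exI[of _ 1], rule exI[of _ 0], rule exI[of _ 0]) simp
  show "b2 \<in> K" unfolding assms mem_Collect_eq
    by (rule exI[of _ 0], rule exI[of _ 1], rule exI[of _ 0]) simp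
  show "b3 \<in> K" unfolding assms mem_Collect_eq
    by (rule exI[of _ 0], rule exI[of _ 0], rule exI[of _ 1]) simp
qed

lemma exists_irr: assumes K: "real_cubic_field K" shows "\<exists>e\<in>K. e \<notin> \<rat>"
proof -
  obtain b1 b2 b3 where b: "Q_lin_indep3 b1 b2 b3"
    "K = {x * b1 + y * b2 + z * b3 | x y z. x \<in> \<rat> \<and> y \<in> \<rat> \<and> z \<in> \<rat>}"
    using K unfolding real_cubic_field_def by blast
  have bK: "b1 \<in> K" "b2 \<in> K" using basis_in[OF b(2)] by auto
  note d = indep3_distinct[OF b(1)]
  show ?thesis
  proof (rule ccontr)
    assume "\<not> ?thesis"
    then have r: "b1 \<in> \<rat>" "b2 \<in> \<rat>" using bK by auto
    have "b2 * b1 + (- b1) * b2 + 0 * b3 = 0" by simp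
    moreover have "- b1 \<in> \<rat>" using r by simp
    ultimately have "- b1 = 0" using b(1)[unfolded Q_lin_indep3_def, rule_format, of b2 "-b1" 0] r by simp
    then show False using d(4) by simp
  qed
qed

lemma gen:
  assumes K: "real_cubic_field K" and eK: "e \<in> K" and eQ: "e \<notin> \<rat>"
  shows "Q_lin_indep3 1 e (e^2)"
proof (rule ccontr)
  have sub: "subfield_real K" using K by (rule cubic_sub)
  assume "\<not> ?thesis"
  then obtain x y w where xyw: "x\<in>\<rat>" "y\<in>\<rat>" "w\<in>\<rat>" "x*1 + y*e + w*e^2 = 0" "\<not>(x=0 \<and> y=0 \<and> w=0)"
    unfolding Q_lin_indep3_def by blast
  have w0: "w \<noteq> 0"
  proof
    assume w: "w = 0"
    show False
    proof (cases "y = 0")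
      case True then show False using xyw w by auto
    next
      case False
      then have "e = -x/y" using xyw w by (auto simp: field_simps)
      then show False using eQ xyw by auto
    qed
  qed
  define p where "p = -y/w"
  define q where "q = -x/w"
  have pq: "p\<in>\<rat>" "q\<in>\<rat>" by (auto simp: p_def q_def xyw)
  have ee: "e*e = p*e + q" using xyw(4) w0 by (simp add: p_def q_def field_simps power2_eq_square)
  obtain b1 b2 b3 where b: "Q_lin_indep3 b1 b2 b3"
    "K = {x * b1 + y * b2 + z * b3 | x y z. x \<in> \<rat> \<and> y \<in> \<rat> \<and> z \<in> \<rat>}"
    using K unfolding real_cubic_field_def by blast
  have bK: "b1 \<in> K" "b2 \<in> K" "b3 \<in> K" using basis_in[OF b(2)] by auto
  have e1: "1 \<noteq> e" using eQ by auto
  have "\<exists>f\<in>K. \<forall>s\<in>\<rat>. \<forall>t\<in>\<rat>. f \<noteq> s + t*e"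
  proof (rule ccontr)
    assume "\<not> ?thesis"
    then have all: "\<forall>f\<in>K. \<exists>s\<in>\<rat>. \<exists>t\<in>\<rat>. f = s + t*e" by blast
    define v where "v = (\<lambda>k::nat. if k=0 then b1 else if k=1 then b2 else b3)"
    have "\<exists>c. (\<forall>k<3. c k \<in> \<rat>) \<and> (\<exists>k<3. c k \<noteq> 0) \<and> (\<Sum>k<(3::nat). c k * v k) = 0"
    proof (rule dep_gen[where T="{1,e}"])
      show "card {1,e} < 3" by (simp add: card_insert_if)
      fix k assume "k < (3::nat)"
      then have "v k \<in> K" using bK by (auto simp: v_def)
      then obtain s t where st: "s\<in>\<rat>" "t\<in>\<rat>" "v k = s + t*e" using all by blast
      then have "v k = s * 1 + t * e" by simp
      then show "\<exists>g. v k = (\<Sum>t\<in>{1,e}. real_of_rat (g t) * t)" using span2_ex[OF e1 st(1,2)] by metis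
    qed simp
    then obtain c where c: "\<forall>k<3. c k \<in> \<rat>" "\<exists>k<3. c k \<noteq> 0" "(\<Sum>k<(3::nat). c k * v k) = 0"
      by blast
    have "c 0 * b1 + c 1 * b2 + c 2 * b3 = 0" using c(3) unfolding sum3 by (simp add: v_def)
    moreover have "c 0 \<in> \<rat>" "c 1 \<in> \<rat>" "c 2 \<in> \<rat>" using c(1) by auto
    ultimately have "c 0 = 0 \<and> c 1 = 0 \<and> c 2 = 0" using b(1)[unfolded Q_lin_indep3_def, rule_format, of "c 0" "c 1" "c 2"] by blast
    moreover have "\<And>k. k < 3 \<Longrightarrow> k = 0 \<or> k = 1 \<or> k = (2::nat)" by auto
    ultimately show False using c(2) by metis
  qed
  then obtain f where f: "f\<in>K" "\<forall>s\<in>\<rat>. \<forall>t\<in>\<rat>. f \<noteq> s + t*e" by blast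
  have oK: "1 \<in> K" and efK: "e * f \<in> K" using sub_facts[OF sub] eK f by auto
  obtain c1 c2 c3 c4 where c: "c1 \<in> \<rat>" "c2 \<in> \<rat>" "c3 \<in> \<rat>" "c4 \<in> \<rat>"
     "c1 \<noteq> 0 \<or> c2 \<noteq> 0 \<or> c3 \<noteq> 0 \<or> c4 \<noteq> 0" "c1 * 1 + c2 * e + c3 * f + c4 * (e*f) = 0"
    using four_dep[OF K oK eK f(1) efK] by blast
  show False
  proof (cases "c3 + c4*e = 0")
    case True
    have c4: "c4 = 0"
    proof (rule ccontr)
      assume "c4 \<noteq> 0"
      then have "e = - c3 / c4" using True by (auto simp: field_simps)
      then show False using eQ c by auto
    qed
    then have c3: "c3 = 0" using True by simp
    have "c1 + c2 * e = 0" using c(6) c3 c4 by simp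
    have c2: "c2 = 0"
    proof (rule ccontr)
      assume "c2 \<noteq> 0"
      then have "e = - c1 / c2" using \<open>c1 + c2 * e = 0\<close> by (auto simp: field_simps)
      then show False using eQ c by auto
    qed
    then have "c1 = 0" using \<open>c1 + c2 * e = 0\<close> by simp
    then show False using c(5) c2 c3 c4 by simp
  next
    case False
    define M where "M = c3^2 + c3*c4*p - c4^2*q"
    have M: "M = (c3 + c4*e)*(c3 + c4*p - c4*e)"
    proof -
      have "(c3 + c4*e)*(c3 + c4*p - c4*e) - M = -(c4^2) * (e*e - p*e - q)"
        by (simp add: M_def algebra_simps power2_eq_square)
      then show ?thesis using ee by simp
    qed
    have nz: "c3 + c4*p - c4*e \<noteq> 0"
    proof (cases "c4 = 0")
      case True then show ?thesis using False by simp
    next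
      case c4: False
      show ?thesis
      proof
        assume "c3 + c4*p - c4*e = 0"
        then have "e = (c3 + c4*p)/c4" using c4 by (auto simp: field_simps)
        then show False using eQ c pq by auto
      qed
    qed
    have M0: "M \<noteq> 0" using M nz False by simp
    have fe: "f * (c3 + c4*e) = -(c1 + c2*e)" using c(6) by (simp add: algebra_simps)
    define s where "s = -(c1*c3 + c1*c4*p - c2*c4*q)/M"
    define t where "t = -(c2*c3 - c1*c4)/M"
    have exp: "(c1 + c2*e)*(c3 + c4*p - c4*e) = (c1*c3 + c1*c4*p - c2*c4*q) + (c2*c3 - c1*c4)*e"
    proof -
      have "(c1 + c2*e)*(c3 + c4*p - c4*e) - ((c1*c3 + c1*c4*p - c2*c4*q) + (c2*c3 - c1*c4)*e)
           = - c2*c4*(e*e - p*e - q)"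
        by (simp add: algebra_simps)
      then show ?thesis using ee by simp
    qed
    have "f * M = (f * (c3 + c4*e)) * (c3 + c4*p - c4*e)" using M by (simp only: mult.assoc)
    also have "\<dots> = -((c1 + c2*e)*(c3 + c4*p - c4*e))" by (subst fe) (rule minus_mult_left[symmetric])
    finally have "f * M = -((c1 + c2*e)*(c3 + c4*p - c4*e))" .
    then have "f * M = -((c1*c3 + c1*c4*p - c2*c4*q) + (c2*c3 - c1*c4)*e)" using exp by simp
    then have f1: "f = -((c1*c3 + c1*c4*p - c2*c4*q) + (c2*c3 - c1*c4)*e) / M"
      using M0 by (simp add: eq_divide_eq)
    have "s + t*e = -((c1*c3 + c1*c4*p - c2*c4*q) + (c2*c3 - c1*c4)*e) / M"
      unfolding s_def t_def using M0 by (simp add: field_simps)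
    then have "f = s + t*e" using f1 by simp
    moreover have "s \<in> \<rat>" "t \<in> \<rat>" using c pq M0 by (auto simp: s_def t_def M_def)
    ultimately show False using f(2) by blast
  qed
qed

lemma span_gen:
  assumes K: "real_cubic_field K" and eK: "e \<in> K" and ind: "Q_lin_indep3 1 e (e^2)" and x: "x \<in> K"
  shows "\<exists>a b c. a \<in> \<rat> \<and> b \<in> \<rat> \<and> c \<in> \<rat> \<and> x = a + b*e + c*e^2"
proof -
  have sub: "subfield_real K" using K by (rule cubic_sub)
  have oK: "1 \<in> K" and e2K: "e^2 \<in> K" using sub_facts[OF sub] eK by (auto simp: power2_eq_square)
  obtain c1 c2 c3 c4 where c: "c1 \<in> \<rat>" "c2 \<in> \<rat>" "c3 \<in> \<rat>" "c4 \<in> \<rat>"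
     "c1 \<noteq> 0 \<or> c2 \<noteq> 0 \<or> c3 \<noteq> 0 \<or> c4 \<noteq> 0" "c1 * 1 + c2 * e + c3 * e^2 + c4 * x = 0"
    using four_dep[OF K oK eK e2K x] by blast
  have c4: "c4 \<noteq> 0"
  proof
    assume "c4 = 0"
    then have "c1 * 1 + c2 * e + c3 * e^2 = 0" using c(6) by simp
    then show False using ind c unfolding Q_lin_indep3_def \<open>c4 = 0\<close> by blast
  qed
  have eq: "c4 * x = c4 * ((-c1/c4) + (-c2/c4)*e + (-c3/c4)*e^2)"
  proof -
    have "c4 * ((-c1/c4) + (-c2/c4)*e + (-c3/c4)*e^2) = -c1 - c2*e - c3*e^2"
      using c4 by (simp add: field_simps)
    also have "\<dots> = c4 * x" using c(6) by linarith
    finally show ?thesis by (rule sym)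
  qed
  from eq have "x = (-c1/c4) + (-c2/c4)*e + (-c3/c4)*e^2" by (simp only: mult_left_cancel[OF c4])
  moreover have "-c1/c4 \<in> \<rat>" "-c2/c4 \<in> \<rat>" "-c3/c4 \<in> \<rat>" using c by auto
  ultimately show ?thesis by blast
qed



locale cgen =
  fixes K :: "real set" and e a0 b0 c0 :: real
  assumes K: "real_cubic_field K" and eK: "e \<in> K" and ind: "Q_lin_indep3 1 e (e^2)"
    and abc: "a0 \<in> \<rat>" "b0 \<in> \<rat>" "c0 \<in> \<rat>" and e3: "e^3 = a0 + b0*e + c0*e^2"

lemma cgen_exists: assumes "real_cubic_field K" shows "\<exists>e a0 b0 c0. cgen K e a0 b0 c0"
proof -
  obtain e where e: "e \<in> K" "e \<notin> \<rat>" using exists_irr[OF assms] by blast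
  have ind: "Q_lin_indep3 1 e (e^2)" using gen[OF assms e] .
  have sub: "subfield_real K" using assms by (rule cubic_sub)
  have "e^3 \<in> K" using sub_facts(4)[OF sub] e(1) by (simp add: power3_eq_cube)
  then obtain a b c where "a \<in> \<rat>" "b \<in> \<rat>" "c \<in> \<rat>" "e^3 = a + b*e + c*e^2"
    using span_gen[OF assms e(1) ind] by blast
  then have "cgen K e a b c" using assms e ind by (simp add: cgen_def)
  then show ?thesis by blast
qed

context cgen
begin

lemma sub: "subfield_real K" using K by (rule cubic_sub)

lemma coord_uniq:
  assumes "a \<in> \<rat>" "b \<in> \<rat>" "c \<in> \<rat>" "a' \<in> \<rat>" "b' \<in> \<rat>" "c' \<in> \<rat>"
    and "a + b*e + c*e^2 = a' + b'*e + c'*e^2"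
  shows "a = a' \<and> b = b' \<and> c = c'"
proof -
  have "(a - a') * 1 + (b - b') * e + (c - c') * e^2 = 0" using assms(7) by (simp add: algebra_simps)
  moreover have "a - a' \<in> \<rat>" "b - b' \<in> \<rat>" "c - c' \<in> \<rat>" using assms by auto
  ultimately show ?thesis using ind[unfolded Q_lin_indep3_def, rule_format, of "a-a'" "b-b'" "c-c'"] by simp
qed

lemma quad_nz:
  assumes "x \<in> \<rat>" "y \<in> \<rat>" "w \<in> \<rat>" "w \<noteq> 0" shows "x + y*e + w*e^2 \<noteq> 0"
  using ind[unfolded Q_lin_indep3_def, rule_format, of x y w] assms by auto

definition pp :: real where "pp = e - c0"
definition qq :: real where "qq = e^2 - c0*e - b0"
definition DD :: real where "DD = pp^2 - 4*qq"
definition z1 :: complex where "z1 = (- of_real pp + csqrt (of_real DD)) / 2"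
definition z2 :: complex where "z2 = (- of_real pp - csqrt (of_real DD)) / 2"
definition rts :: "complex set" where "rts = {of_real e, z1, z2}"

lemma DD_nz: "DD \<noteq> 0"
proof -
  have "DD = (c0^2 + 4*b0) + (2*c0)*e + (-3)*e^2" by (simp add: DD_def pp_def qq_def power2_eq_square algebra_simps)
  moreover have "(c0^2 + 4*b0) + (2*c0)*e + (-3)*e^2 \<noteq> 0" using abc by (intro quad_nz) auto
  ultimately show ?thesis by simp
qed

lemma R_nz: "e^2 + pp*e + qq \<noteq> 0"
proof -
  have "e^2 + pp*e + qq = (-b0) + (-2*c0)*e + 3*e^2" by (simp add: pp_def qq_def power2_eq_square algebra_simps)
  moreover have "(-b0) + (-2*c0)*e + 3*e^2 \<noteq> 0" using abc by (intro quad_nz) auto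
  ultimately show ?thesis by simp
qed

lemma quad_factor: "(t::complex)^2 + of_real pp * t + of_real qq = (t - z1) * (t - z2)"
proof -
  have "(t - z1) * (t - z2) = t^2 - (z1 + z2) * t + z1 * z2" by (simp add: algebra_simps power2_eq_square)
  moreover have "z1 + z2 = - of_real pp" by (simp add: z1_def z2_def field_simps)
  moreover have "z1 * z2 = ((of_real pp)^2 - (csqrt (of_real DD))^2) / 4"
    by (simp add: z1_def z2_def field_simps power2_eq_square)
  moreover have "((of_real pp :: complex)^2 - (csqrt (of_real DD))^2) / 4 = of_real qq"
    by (simp add: DD_def)
  ultimately show ?thesis by simp
qed

lemma cubic_factor:
  "(t::complex)^3 - of_real c0 * t^2 - of_real b0 * t - of_real a0 = (t - of_real e) * (t - z1) * (t - z2)"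
proof -
  have e3c: "(of_real e :: complex)^3 = of_real a0 + of_real b0 * of_real e + of_real c0 * (of_real e)^2"
    using arg_cong[OF e3, of "of_real :: real \<Rightarrow> complex"] by simp
  have "(t - of_real e) * (t^2 + of_real pp * t + of_real qq) - (t^3 - of_real c0 * t^2 - of_real b0 * t - of_real a0)
      = - ((of_real e)^3 - of_real a0 - of_real b0 * of_real e - of_real c0 * (of_real e)^2)"
    by (simp add: pp_def qq_def algebra_simps power2_eq_square power3_eq_cube)
  also have "\<dots> = 0" using e3c by simp
  finally have "(t - of_real e) * (t^2 + of_real pp * t + of_real qq) = t^3 - of_real c0 * t^2 - of_real b0 * t - of_real a0"
    by simp
  then show ?thesis using quad_factor[of t] by (simp add: mult.assoc)
qed

lemma rts_iff: "t \<in> rts \<longleftrightarrow> (t::complex)^3 = of_real a0 + of_real b0 * t + of_real c0 * t^2"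
proof -
  have "t^3 = of_real a0 + of_real b0 * t + of_real c0 * t^2 \<longleftrightarrow>
        t^3 - of_real c0 * t^2 - of_real b0 * t - of_real a0 = 0" by (auto simp: algebra_simps)
  also have "\<dots> \<longleftrightarrow> t \<in> rts" unfolding cubic_factor by (auto simp: rts_def)
  finally show ?thesis by simp
qed

lemma z_ne: "z1 \<noteq> z2" "z1 \<noteq> of_real e" "z2 \<noteq> of_real e"
proof -
  show "z1 \<noteq> z2" using DD_nz by (simp add: z1_def z2_def field_simps)
  have "(of_real e - z1) * (of_real e - z2) = of_real (e^2 + pp*e + qq)"
    using quad_factor[of "of_real e"] by simp
  then have "(of_real e - z1) * (of_real e - z2) \<noteq> 0" using R_nz by (metis of_real_eq_0_iff)
  then show "z1 \<noteq> of_real e" "z2 \<noteq> of_real e" by auto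
qed

lemma card_rts: "card rts = 3" using z_ne by (auto simp: rts_def card_insert_if)

end


lemma mul_red:
  fixes t :: "'a::real_field"
  assumes "t^3 = of_real a0 + of_real b0 * t + of_real c0 * t^2"
  shows "(of_real a + of_real b * t + of_real c * t^2) * (of_real a' + of_real b' * t + of_real c' * t^2)
    = of_real (a*a' + (b*c' + c*b')*a0 + c*c'*c0*a0)
    + of_real (a*b' + b*a' + (b*c' + c*b')*b0 + c*c'*(a0 + c0*b0)) * t
    + of_real (a*c' + b*b' + c*a' + (b*c' + c*b')*c0 + c*c'*(b0 + c0^2)) * t^2"
proof -
  let ?L = "(of_real a + of_real b * t + of_real c * t^2) * (of_real a' + of_real b' * t + of_real c' * t^2)"
  let ?R = "of_real (a*a' + (b*c' + c*b')*a0 + c*c'*c0*a0)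
    + of_real (a*b' + b*a' + (b*c' + c*b')*b0 + c*c'*(a0 + c0*b0)) * t
    + of_real (a*c' + b*b' + c*a' + (b*c' + c*b')*c0 + c*c'*(b0 + c0^2)) * t^2"
  have "?L - ?R = (of_real (b*c' + c*b') + of_real (c*c') * t + of_real (c*c'*c0))
        * (t^3 - (of_real a0 + of_real b0 * t + of_real c0 * t^2))"
    by (simp add: algebra_simps power2_eq_square power3_eq_cube of_real_mult of_real_add)
  also have "\<dots> = 0" using assms by simp
  finally show ?thesis by simp
qed

context cgen
begin

definition crd :: "real \<Rightarrow> real \<times> real \<times> real" where
  "crd x = (SOME p. fst p \<in> \<rat> \<and> fst (snd p) \<in> \<rat> \<and> snd (snd p) \<in> \<rat> \<and>
                    x = fst p + fst (snd p) * e + snd (snd p) * e^2)"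

lemma crd_eq:
  assumes "a \<in> \<rat>" "b \<in> \<rat>" "c \<in> \<rat>" shows "crd (a + b*e + c*e^2) = (a, b, c)"
proof -
  let ?P = "\<lambda>p. fst p \<in> \<rat> \<and> fst (snd p) \<in> \<rat> \<and> snd (snd p) \<in> \<rat> \<and>
                    a + b*e + c*e^2 = fst p + fst (snd p) * e + snd (snd p) * e^2"
  have "?P (a,b,c)" using assms by simp
  then have Pp: "?P (SOME p. ?P p)" by (rule someI)
  define p where "p = (SOME p. ?P p)"
  have P2: "?P p" using Pp by (simp only: p_def)
  have "a = fst p \<and> b = fst (snd p) \<and> c = snd (snd p)"
    using coord_uniq[OF assms, of "fst p" "fst (snd p)" "snd (snd p)"] P2 by blast
  then have "p = (a,b,c)" by (simp add: prod_eq_iff)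
  then show ?thesis by (simp add: crd_def p_def)
qed

lemma crd_ex:
  assumes "x \<in> K"
  obtains a b c where "a \<in> \<rat>" "b \<in> \<rat>" "c \<in> \<rat>" "x = a + b*e + c*e^2"
  using span_gen[OF K eK ind assms] that by blast

definition evc :: "complex \<Rightarrow> real \<times> real \<times> real \<Rightarrow> complex" where
  "evc t p = (case p of (a,b,c) \<Rightarrow> of_real a + of_real b * t + of_real c * t^2)"

definition sig :: "complex \<Rightarrow> real \<Rightarrow> complex" where
  "sig t x = (if x \<in> K then evc t (crd x) else 0)"

lemma sig_coords:
  assumes "a \<in> \<rat>" "b \<in> \<rat>" "c \<in> \<rat>"
  shows "sig t (a + b*e + c*e^2) = of_real a + of_real b * t + of_real c * t^2"
proof -
  have "a + b*e + c*e^2 \<in> K" using assms sub_rats[OF sub] sub_facts[OF sub] eK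
    by (simp add: power2_eq_square)
  then show ?thesis using crd_eq[OF assms] by (simp add: sig_def evc_def)
qed

lemma e3r: "e^3 = of_real a0 + of_real b0 * e + of_real c0 * e^2" using e3 by simp

lemma sig_emb: assumes t: "t \<in> rts" shows "sig t \<in> embeddings K"
proof -
  have t3: "t^3 = of_real a0 + of_real b0 * t + of_real c0 * t^2" using t rts_iff by blast
  have r0: "a0 \<in> \<rat>" "b0 \<in> \<rat>" "c0 \<in> \<rat>" using abc by auto
  have one: "sig t 1 = 1"
    using sig_coords[of 1 0 0 t] by simp
  have addmul: "sig t (x + y) = sig t x + sig t y \<and> sig t (x * y) = sig t x * sig t y"
    if x: "x \<in> K" and y: "y \<in> K" for x y
  proof -
    obtain a b c where abc: "a \<in> \<rat>" "b \<in> \<rat>" "c \<in> \<rat>" "x = a + b*e + c*e^2"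
      by (rule crd_ex[OF x])
    obtain a' b' c' where abc': "a' \<in> \<rat>" "b' \<in> \<rat>" "c' \<in> \<rat>" "y = a' + b'*e + c'*e^2"
      by (rule crd_ex[OF y])
    have "x + y = (a + a') + (b + b')*e + (c + c')*e^2" using abc abc' by (simp add: algebra_simps)
    have sxy: "sig t (x + y) = of_real (a+a') + of_real (b+b') * t + of_real (c+c') * t^2"
      unfolding \<open>x + y = _\<close> by (rule sig_coords) (use abc abc' in auto)
    have sx: "sig t x = of_real a + of_real b * t + of_real c * t^2"
      unfolding abc(4) by (rule sig_coords) (use abc in auto)
    have sy: "sig t y = of_real a' + of_real b' * t + of_real c' * t^2"
      unfolding abc'(4) by (rule sig_coords) (use abc' in auto)
    have s1: "sig t (x + y) = sig t x + sig t y"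
      unfolding sxy sx sy by (simp add: algebra_simps)
    have xy: "x * y = (a*a' + (b*c' + c*b')*a0 + c*c'*c0*a0)
    + (a*b' + b*a' + (b*c' + c*b')*b0 + c*c'*(a0 + c0*b0)) * e
    + (a*c' + b*b' + c*a' + (b*c' + c*b')*c0 + c*c'*(b0 + c0^2)) * e^2"
      using mul_red[OF e3r, of a b c a' b' c'] abc abc' by simp
    have q: "a*a' + (b*c' + c*b')*a0 + c*c'*c0*a0 \<in> \<rat>"
       "a*b' + b*a' + (b*c' + c*b')*b0 + c*c'*(a0 + c0*b0) \<in> \<rat>"
       "a*c' + b*b' + c*a' + (b*c' + c*b')*c0 + c*c'*(b0 + c0^2) \<in> \<rat>"
      using abc abc' r0 by auto
    have "sig t (x * y) = sig t x * sig t y"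
      unfolding xy sig_coords[OF q] using abc abc' sig_coords mul_red[OF t3, of a b c a' b' c'] by simp
    with s1 show ?thesis by simp
  qed
  show ?thesis unfolding embeddings_def using one addmul by (auto simp: sig_def)
qed

lemma emb_basic:
  assumes s: "\<sigma> \<in> embeddings K"
  shows "\<sigma> 0 = 0" "\<And>x. x \<in> K \<Longrightarrow> \<sigma> (-x) = - \<sigma> x"
proof -
  have h: "\<forall>x\<in>K. \<forall>y\<in>K. \<sigma> (x + y) = \<sigma> x + \<sigma> y \<and> \<sigma> (x * y) = \<sigma> x * \<sigma> y"
    using s by (simp add: embeddings_def)
  have "\<sigma> (0 + 0) = \<sigma> 0 + \<sigma> 0" using h sub_facts(1)[OF sub] by blast
  then show z: "\<sigma> 0 = 0" by simp
  fix x assume x: "x \<in> K"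
  have "\<sigma> (x + - x) = \<sigma> x + \<sigma> (-x)" using h x sub_facts(5)[OF sub x] by blast
  then have "\<sigma> x + \<sigma> (-x) = 0" using z by simp
  then show "\<sigma> (-x) = - \<sigma> x" by (metis add.commute eq_neg_iff_add_eq_0)
qed

lemma emb_rat:
  assumes s: "\<sigma> \<in> embeddings K" and q: "q \<in> \<rat>" shows "\<sigma> q = of_real q"
proof -
  have h: "\<forall>x\<in>K. \<forall>y\<in>K. \<sigma> (x + y) = \<sigma> x + \<sigma> y \<and> \<sigma> (x * y) = \<sigma> x * \<sigma> y"
    and one: "\<sigma> 1 = 1"
    using s by (simp_all add: embeddings_def)
  have nat: "\<sigma> (real n) = of_nat n" for n
  proof (induction n)
    case 0 then show ?case using emb_basic[OF s] by simp
  next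
    case (Suc n)
    have "\<sigma> (real n + 1) = \<sigma> (real n) + \<sigma> 1" using h sub_nat[OF sub] sub_facts(2)[OF sub] by blast
    then show ?case using Suc one by (simp add: add.commute)
  qed
  have int: "\<sigma> (real_of_int n) = of_int n" for n
  proof (cases "n \<ge> 0")
    case True then show ?thesis using nat[of "nat n"] by simp
  next
    case False
    have "\<sigma> (- real (nat (-n))) = - \<sigma> (real (nat (-n)))"
      using emb_basic(2)[OF s sub_nat[OF sub]] by blast
    then show ?thesis using False nat[of "nat (-n)"] by simp
  qed
  obtain m n where mn0: "n > 0" "coprime m n" "q = real_of_int m / real_of_int n" using Rats_cases'[OF q] by blast
  then have mn: "q = real_of_int m / real_of_int n" "n \<noteq> 0" by auto
  have qK: "q \<in> K" using sub_rats[OF sub q] .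
  have "\<sigma> (real_of_int n * q) = \<sigma> (real_of_int n) * \<sigma> q" using h sub_int[OF sub] qK by blast
  moreover have "real_of_int n * q = real_of_int m" using mn by simp
  ultimately have "\<sigma> (real_of_int m) = of_int n * \<sigma> q" using int by simp
  then have "of_int m = of_int n * \<sigma> q" using int by simp
  then have "\<sigma> q = of_int m / of_int n" using mn(2) by (simp add: eq_divide_eq mult.commute)
  then show ?thesis using mn(1) by simp
qed

lemma emb_poly:
  assumes s: "\<sigma> \<in> embeddings K" and abc: "a \<in> \<rat>" "b \<in> \<rat>" "c \<in> \<rat>"
  shows "\<sigma> (a + b*e + c*e^2) = of_real a + of_real b * \<sigma> e + of_real c * (\<sigma> e)^2"
proof -
  have h: "\<And>x y. x\<in>K \<Longrightarrow> y\<in>K \<Longrightarrow> \<sigma> (x + y) = \<sigma> x + \<sigma> y \<and> \<sigma> (x * y) = \<sigma> x * \<sigma> y"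
    using s by (simp add: embeddings_def)
  have K3: "a \<in> K" "b \<in> K" "c \<in> K" using abc sub_rats[OF sub] by auto
  have eeK: "e*e \<in> K" using sub_facts(4)[OF sub eK eK] .
  have bK: "b*e \<in> K" "c*(e*e) \<in> K" using sub_facts(4)[OF sub] K3 eK eeK by auto
  have "\<sigma> (a + b*e + c*(e*e)) = \<sigma> a + \<sigma> (b*e) + \<sigma> (c*(e*e))"
    using h K3 bK sub_facts(3)[OF sub] by metis
  also have "\<dots> = \<sigma> a + \<sigma> b * \<sigma> e + \<sigma> c * (\<sigma> e * \<sigma> e)"
    using h K3 eK eeK by metis
  finally show ?thesis using emb_rat[OF s] abc by (simp add: power2_eq_square)
qed

lemma emb_root: assumes s: "\<sigma> \<in> embeddings K" shows "\<sigma> e \<in> rts"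
proof -
  have h: "\<And>x y. x\<in>K \<Longrightarrow> y\<in>K \<Longrightarrow> \<sigma> (x + y) = \<sigma> x + \<sigma> y \<and> \<sigma> (x * y) = \<sigma> x * \<sigma> y"
    using s by (simp add: embeddings_def)
  have eeK: "e*e \<in> K" using sub_facts(4)[OF sub eK eK] .
  have "\<sigma> (e * (e*e)) = \<sigma> e * (\<sigma> e * \<sigma> e)" using h eK eeK by metis
  then have "\<sigma> (e^3) = (\<sigma> e)^3" by (simp add: power3_eq_cube mult.assoc)
  moreover have "\<sigma> (e^3) = of_real a0 + of_real b0 * \<sigma> e + of_real c0 * (\<sigma> e)^2"
    using e3 emb_poly[OF s abc] by simp
  ultimately show ?thesis using rts_iff by simp
qed

lemma emb_is_sig: assumes s: "\<sigma> \<in> embeddings K" shows "\<sigma> = sig (\<sigma> e)"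
proof
  fix x
  show "\<sigma> x = sig (\<sigma> e) x"
  proof (cases "x \<in> K")
    case True
    obtain a b c where abc: "a \<in> \<rat>" "b \<in> \<rat>" "c \<in> \<rat>" "x = a + b*e + c*e^2"
      by (rule crd_ex[OF True])
    then show ?thesis using emb_poly[OF s] sig_coords by simp
  next
    case False then show ?thesis using s by (simp add: embeddings_def sig_def)
  qed
qed

lemma sig_e: "sig t e = t"
  using sig_coords[of 0 1 0 t] by simp

lemma emb_eq: "embeddings K = sig ` rts"
proof
  show "embeddings K \<subseteq> sig ` rts" using emb_is_sig emb_root by blast
  show "sig ` rts \<subseteq> embeddings K" using sig_emb by blast
qed

lemma sig_inj: "inj_on sig rts"
  by (rule inj_onI) (metis sig_e)

lemma sig_real: assumes "x \<in> K" shows "sig (of_real e) x = of_real x"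
proof -
  obtain a b c where abc: "a \<in> \<rat>" "b \<in> \<rat>" "c \<in> \<rat>" "x = a + b*e + c*e^2"
    by (rule crd_ex[OF assms])
  then show ?thesis using sig_coords by simp
qed

lemma norm_formula:
  assumes "x \<in> K" shows "field_norm K x = of_real x * sig z1 x * sig z2 x"
proof -
  have "field_norm K x = (\<Prod>\<sigma>\<in>sig ` rts. \<sigma> x)" by (simp add: field_norm_def emb_eq)
  also have "\<dots> = (\<Prod>t\<in>rts. sig t x)" by (simp add: prod.reindex[OF sig_inj])
  also have "\<dots> = sig (of_real e) x * sig z1 x * sig z2 x"
    using z_ne by (simp add: rts_def mult.assoc)
  finally show ?thesis using sig_real[OF assms] by simp
qed

lemma norm_coords:
  assumes "a \<in> \<rat>" "b \<in> \<rat>" "c \<in> \<rat>"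
  shows "field_norm K (a + b*e + c*e^2) = of_real (a + b*e + c*e^2)
     * (of_real a + of_real b * z1 + of_real c * z1^2) * (of_real a + of_real b * z2 + of_real c * z2^2)"
proof -
  have "a + b*e + c*e^2 \<in> K" using assms sub_rats[OF sub] sub_facts[OF sub] eK
    by (simp add: power2_eq_square)
  then show ?thesis using norm_formula sig_coords[OF assms] by simp
qed

end


lemma Ind_cases:
  assumes "(i,j) \<in> Ind"
  shows "(i,j) = (0,1) \<or> (i,j) = (1,0) \<or> (i,j) = (0,2) \<or> (i,j) = (2,0) \<or> (i,j) = (1,2) \<or> (i,j) = (2,1)"
  using assms unfolding Ind_def by auto

lemma theta_facts:
  assumes "(i,j) \<in> Ind"
  shows "theta i j < 3" "theta i j \<noteq> i" "theta i j \<noteq> j" "i < 3" "j < 3" "i \<noteq> j"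
    "\<And>m. m < 3 \<Longrightarrow> m = i \<or> m = j \<or> m = theta i j"
  using Ind_cases[OF assms] by (auto simp: theta_def)

lemma sum3_perm:
  assumes "(i,j) \<in> Ind"
  shows "f 0 + f 1 + f 2 = f i + f j + f (theta i j :: nat) + (0::real)"
  using Ind_cases[OF assms] by (auto simp: theta_def)

lemma pair_cases:
  assumes "(i,j) \<in> Ind" "(k,l) \<in> Ind" "{k,l} \<noteq> {i,j}"
  shows "(k = theta i j \<and> (l = i \<or> l = j)) \<or> (l = theta i j \<and> (k = i \<or> k = j))"
  using Ind_cases[OF assms(1)] Ind_cases[OF assms(2)] assms(3) by (auto simp: theta_def doubleton_eq_iff)

lemma pair_ok:
  fixes w :: "nat \<Rightarrow> real"
  assumes ij: "(i,j) \<in> Ind" and pos: "\<forall>m<3. w m > 0"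
    and lt: "w (theta i j) < w i" "w (theta i j) < w j"
  shows "\<forall>(k,l)\<in>Ind. {k,l} \<noteq> {i,j} \<longrightarrow> w k * w l < w i * w j"
proof (clarify)
  fix k l assume kl: "(k,l) \<in> Ind" "{k,l} \<noteq> {i,j}"
  note tf = theta_facts[OF ij]
  have wi: "w i > 0" and wj: "w j > 0" using pos tf by auto
  have a: "w (theta i j) * w i < w i * w j" using lt(2) wi by (simp add: mult.commute)
  have b: "w (theta i j) * w j < w i * w j" using lt(1) wj by simp
  show "w k * w l < w i * w j"
    using pair_cases[OF ij kl] a b by (auto simp: mult.commute)
qed

lemma mode_cases:
  assumes "(i,j) \<in> Ind" "(k,l) \<in> Ind" "(k,l) \<noteq> (i, theta i j)" "(k,l) \<noteq> (theta i j, i)"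
  shows "(k,l) = (i,j) \<or> (k,l) = (j,i) \<or> (k,l) = (j, theta i j) \<or> (k,l) = (theta i j, j)"
  using Ind_cases[OF assms(1)] Ind_cases[OF assms(2)] assms(3,4) by (auto simp: theta_def)

lemma theta_sym: "theta j i = theta i j" by (simp add: theta_def)

lemma theta_theta:
  assumes "(i,j) \<in> Ind" shows "theta j (theta i j) = i"
  using Ind_cases[OF assms] by (auto simp: theta_def)

lemma coord_X:
  fixes X :: "nat \<Rightarrow> real"
  assumes "s = X 0 + X 1 + X 2" "s \<noteq> 0" "m < 3"
  shows "coord (X 1 / s) (X 2 / s) m = X m / s"
proof -
  have "1 - X 1 / s - X 2 / s = (s - X 1 - X 2) / s" using assms(2) by (simp add: diff_divide_distrib)
  also have "s - X 1 - X 2 = X 0" using assms(1) by simp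
  finally have "1 - X 1 / s - X 2 / s = X 0 / s" .
  then show ?thesis using assms(3) by (auto simp: coord_def less_Suc_eq numeral_eq_Suc)
qed

lemma tri_iff:
  assumes "(i,j) \<in> Ind"
  shows "(a,b) \<in> tri (i,j) \<longleftrightarrow> (a,b) \<in> Delta \<and> coord a b j \<le> coord a b i"
  using Ind_cases[OF assms] by (auto simp: tri_def coord_def)

lemma Tmap_coord:
  assumes "(i,j) \<in> Ind" "Tmap (i,j) (a,b) = (a',b')" "1 - coord a b j \<noteq> 0" "m < 3"
  shows "coord a' b' m = (if m = i then coord a b i - coord a b j else coord a b m) / (1 - coord a b j)"
proof -
  have m: "m = 0 \<or> m = 1 \<or> m = 2" using assms(4) by auto
  show ?thesis
    using Ind_cases[OF assms(1)] m assms(2,3)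
    by (elim disjE) (auto simp: Tmap_def coord_def field_simps)
qed

lemma vval_W:
  "vval K r a b m n = (coord a b m powr r / cmod (field_norm K (coord a b m))) *
                      (coord a b n powr r / cmod (field_norm K (coord a b n)))"
  by (simp add: vval_def)



definition Wn :: "real set \<Rightarrow> real \<Rightarrow> real \<Rightarrow> real" where
  "Wn K r x = x powr r / cmod (field_norm K x)"

lemma emb_props:
  assumes "\<sigma> \<in> embeddings K"
  shows "\<sigma> 1 = 1" "\<And>x y. x \<in> K \<Longrightarrow> y \<in> K \<Longrightarrow> \<sigma> (x * y) = \<sigma> x * \<sigma> y"
  using assms by (auto simp: embeddings_def)

lemma fn_mult:
  assumes "x \<in> K" "y \<in> K"
  shows "field_norm K (x * y) = field_norm K x * field_norm K y"
  unfolding field_norm_def prod.distrib[symmetric]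
  by (rule prod.cong) (use emb_props(2) assms in auto)

lemma fn_one: "field_norm K 1 = 1"
  unfolding field_norm_def by (rule prod.neutral) (use emb_props(1) in auto)

lemma emb_nz:
  assumes sub: "subfield_real K" and s: "\<sigma> \<in> embeddings K" and x: "x \<in> K" "x \<noteq> 0"
  shows "\<sigma> x \<noteq> 0"
proof
  assume h: "\<sigma> x = 0"
  have "inverse x \<in> K" using sub_facts(6)[OF sub x(1)] .
  then have "\<sigma> (x * inverse x) = \<sigma> x * \<sigma> (inverse x)" using emb_props(2)[OF s x(1)] by blast
  then have "\<sigma> 1 = 0" using h x(2) by simp
  then show False using emb_props(1)[OF s] by simp
qed

lemma fn_nz:
  assumes sub: "subfield_real K" and x: "x \<in> K" "x \<noteq> 0"
  shows "field_norm K x \<noteq> 0"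
proof (cases "finite (embeddings K)")
  case True then show ?thesis using emb_nz[OF sub _ x] by (simp add: field_norm_def)
next
  case False then show ?thesis by (simp add: field_norm_def)
qed

lemma Wn_pos:
  assumes sub: "subfield_real K" and x: "x \<in> K" "x > 0" shows "Wn K r x > 0"
  using fn_nz[OF sub x(1)] x(2) by (simp add: Wn_def)

lemma Wn_one: "Wn K r 1 = 1" by (simp add: Wn_def fn_one)

lemma Wn_div:
  assumes sub: "subfield_real K" and x: "x \<in> K" "x > 0" and s: "s \<in> K" "s > 0"
  shows "Wn K r (x / s) = Wn K r x / Wn K r s"
proof -
  have xsK: "x / s \<in> K" using sub_div[OF sub x(1) s(1)] .
  have "field_norm K x = field_norm K ((x/s) * s)" using s(2) by simp
  also have "\<dots> = field_norm K (x/s) * field_norm K s" using fn_mult[OF xsK s(1)] .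
  finally have n: "field_norm K (x/s) = field_norm K x / field_norm K s"
    using fn_nz[OF sub s(1)] s(2) by (simp add: field_simps)
  have p: "(x/s) powr r = x powr r / s powr r" using x s by (simp add: powr_divide)
  show ?thesis unfolding Wn_def n p using fn_nz[OF sub s(1)] s(2)
    by (simp add: norm_divide)
qed

lemma eps_crit:
  fixes X :: "nat \<Rightarrow> real"
  assumes sub: "subfield_real K" and ij: "(i,j) \<in> Ind" and D: "(a,b) \<in> Delta"
    and co: "\<forall>m<3. coord a b m = X m / s" and XK: "\<forall>m<3. X m \<in> K \<and> X m > 0"
    and sK: "s \<in> K" "s > 0"
    and lt: "Wn K r (X (theta i j)) < Wn K r (X i)" "Wn K r (X (theta i j)) < Wn K r (X j)"
    and le: "X j \<le> X i"
  shows "eps_is K r a b (i,j)"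
proof -
  note tf = theta_facts[OF ij]
  define w where "w m = Wn K r (coord a b m)" for m
  have wX: "w m = Wn K r (X m) / Wn K r s" if "m < 3" for m
    unfolding w_def using co that XK Wn_div[OF sub _ _ sK] by auto
  have ws: "Wn K r s > 0" using Wn_pos[OF sub sK] .
  have wpos: "\<forall>m<3. w m > 0" using wX XK Wn_pos[OF sub] ws by auto
  have l1: "w (theta i j) < w i" using wX tf lt(1) ws by (simp add: divide_strict_right_mono)
  have l2: "w (theta i j) < w j" using wX tf lt(2) ws by (simp add: divide_strict_right_mono)
  have pr: "\<forall>(k,l)\<in>Ind. {k,l} \<noteq> {i,j} \<longrightarrow> w k * w l < w i * w j"
    using pair_ok[OF ij wpos l1 l2] .
  have vv: "vval K r a b k l = w k * w l" for k l by (simp add: vval_W w_def Wn_def)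
  have tri: "(a,b) \<in> tri (i,j)"
    using tri_iff[OF ij] D co tf le sK(2) by (simp add: divide_right_mono)
  show ?thesis unfolding eps_is_def using ij pr tri by (simp add: vv)
qed

lemma indep_transfer:
  fixes X :: "nat \<Rightarrow> real"
  assumes ij: "(i,j) \<in> Ind" and ind: "Q_lin_indep3 1 u z"
    and X: "X i = 1 + u" "X j = 1" "X (theta i j) = z"
    and s: "s = X 0 + X 1 + X 2" "s \<noteq> 0"
  shows "Q_lin_indep3 1 (X 1 / s) (X 2 / s)"
  unfolding Q_lin_indep3_def
proof (intro ballI impI)
  fix x y w assume q: "x \<in> \<rat>" "y \<in> \<rat>" "w \<in> \<rat>" and h: "x * 1 + y * (X 1 / s) + w * (X 2 / s) = 0"
  note tf = theta_facts[OF ij]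
  define c where "c m = (if m = 0 then x else if m = 1 then x + y else x + w)" for m :: nat
  have cq: "c m \<in> \<rat>" for m using q by (simp add: c_def)
  have "x * s + y * X 1 + w * X 2 = 0"
  proof -
    have "(x * 1 + y * (X 1 / s) + w * (X 2 / s)) * s = x * s + y * X 1 + w * X 2"
      using s(2) by (simp add: field_simps)
    then show ?thesis using h by simp
  qed
  then have "c 0 * X 0 + c 1 * X 1 + c 2 * X 2 = 0" unfolding c_def s(1) by (simp add: algebra_simps)
  then have "c i * X i + c j * X j + c (theta i j) * X (theta i j) = 0"
    using sum3_perm[OF ij, of "\<lambda>m. c m * X m"] by simp
  then have "(c i + c j) * 1 + c i * u + c (theta i j) * z = 0" unfolding X by (simp add: algebra_simps)
  then have z3: "c i + c j = 0" "c i = 0" "c (theta i j) = 0"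
    using ind[unfolded Q_lin_indep3_def, rule_format, of "c i + c j" "c i" "c (theta i j)"] cq by auto
  then have "c m = 0" if "m < 3" for m using tf(7)[OF that] by auto
  then have "c 0 = 0" "c 1 = 0" "c 2 = 0" by auto
  then show "x = 0 \<and> y = 0 \<and> w = 0" by (simp add: c_def)
qed



lemma assemble:
  fixes K :: "real set" and r u z :: real and i j k l :: nat
  assumes sub: "subfield_real K" and ij: "(i,j) \<in> Ind" and kl: "(k,l) \<in> Ind"
    and uz: "u \<in> K" "z \<in> K" "u > 0" "z > 0" and ind: "Q_lin_indep3 1 u z"
    and c1: "Wn K r z < Wn K r (1+u)" "Wn K r z < 1"
    and mode: "((k,l) = (i,j) \<and> 1 \<le> u \<and> Wn K r z < Wn K r u) \<or>
               ((k,l) = (j,i) \<and> u \<le> 1 \<and> Wn K r z < Wn K r u) \<or>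
               ((k,l) = (j, theta i j) \<and> z \<le> 1 \<and> Wn K r u < 1 \<and> Wn K r u < Wn K r z) \<or>
               ((k,l) = (theta i j, j) \<and> 1 \<le> z \<and> Wn K r u < 1 \<and> Wn K r u < Wn K r z)"
  shows "\<exists>(a, b)\<in>Delta_K K. eps_is K r a b (i, j) \<and>
           (case Tmap (i, j) (a, b) of (a', b') \<Rightarrow> eps_is K r a' b' (k, l))"
proof -
  note tf = theta_facts[OF ij]
  define t where "t = theta i j"
  define X where "X m = (if m = j then 1 else if m = i then 1 + u else z)" for m
  have Xi: "X i = 1 + u" and Xj: "X j = 1" and Xt: "X t = z" using tf by (auto simp: X_def t_def)
  have oneK: "1 \<in> K" using sub_facts(2)[OF sub] .
  have upK: "1 + u \<in> K" using sub_facts(3)[OF sub oneK uz(1)] .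
  have XK: "\<forall>m<3. X m \<in> K \<and> X m > 0" using oneK upK uz by (auto simp: X_def)
  define s where "s = X 0 + X 1 + X 2"
  have s_eq: "s = 2 + u + z" using sum3_perm[OF ij, of X] Xi Xj Xt by (simp add: s_def t_def)
  have s0: "s > 1" using s_eq uz by simp
  have sK: "s \<in> K" unfolding s_def using XK sub_facts(3)[OF sub] by simp
  define a where "a = X 1 / s"
  define b where "b = X 2 / s"
  have co: "\<forall>m<3. coord a b m = X m / s" using coord_X[OF s_def] s0 by (simp add: a_def b_def)
  have X0: "X 0 > 0" "X 1 > 0" "X 2 > 0" using XK by auto
  have aK: "a \<in> K" "b \<in> K" using sub_div[OF sub] XK sK by (auto simp: a_def b_def)
  have apos: "a > 0" "b > 0" using X0 s0 by (auto simp: a_def b_def)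
  have ab1: "a + b < 1"
  proof -
    have "a + b = (X 1 + X 2) / s" by (simp add: a_def b_def add_divide_distrib)
    also have "\<dots> < 1" using X0 s0 by (simp add: s_def)
    finally show ?thesis .
  qed
  have indab: "Q_lin_indep3 1 a b"
    using indep_transfer[OF ij ind Xi Xj Xt[unfolded t_def] s_def] s0 by (simp add: a_def b_def)
  have DK: "(a,b) \<in> Delta_K K" using aK apos ab1 indab by (simp add: Delta_K_def)
  have D: "(a,b) \<in> Delta" using apos ab1 by (simp add: Delta_def)
  have eps1: "eps_is K r a b (i,j)"
  proof (rule eps_crit[OF sub ij D co XK sK(1)])
    show "s > 0" using s0 by simp
    show "Wn K r (X (theta i j)) < Wn K r (X i)" using c1 Xi Xt by (simp add: t_def)
    show "Wn K r (X (theta i j)) < Wn K r (X j)" using c1 Xj Xt Wn_one by (simp add: t_def)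
    show "X j \<le> X i" using Xi Xj uz by simp
  qed
  obtain a' b' where T: "Tmap (i,j) (a,b) = (a',b')" by (metis prod.exhaust)
  define Y where "Y m = (if m = i then u else X m)" for m
  define s' where "s' = s - 1"
  have s'0: "s' > 0" using s0 by (simp add: s'_def)
  have s'K: "s' \<in> K" unfolding s'_def using sub_diff[OF sub sK oneK] .
  have cj: "coord a b j = 1 / s" using co tf Xj by simp
  have cj1: "1 - coord a b j \<noteq> 0" using cj s0 by simp
  have co': "\<forall>m<3. coord a' b' m = Y m / s'"
  proof (intro allI impI)
    fix m :: nat assume m: "m < 3"
    have e1: "1 - coord a b j = s' / s" using cj s0 by (simp add: s'_def field_simps)
    have "coord a' b' m = (if m = i then coord a b i - coord a b j else coord a b m) / (1 - coord a b j)"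
      using Tmap_coord[OF ij T cj1 m] .
    also have "\<dots> = (if m = i then X i - X j else X m) / s'"
      using co m tf s0 s'0 unfolding e1 by (auto simp: field_simps)
    also have "\<dots> = Y m / s'" using Xi Xj by (simp add: Y_def)
    finally show "coord a' b' m = Y m / s'" .
  qed
  have Yi: "Y i = u" and Yj: "Y j = 1" and Yt: "Y t = z" using tf Xj Xt by (auto simp: Y_def t_def)
  have YK: "\<forall>m<3. Y m \<in> K \<and> Y m > 0" using XK uz by (auto simp: Y_def)
  have D': "(a',b') \<in> Delta"
  proof -
    have "coord a' b' 0 \<ge> 0" "coord a' b' 1 \<ge> 0" "coord a' b' 2 \<ge> 0"
      using co' s'0 YK[rule_format, of 0] YK[rule_format, of 1] YK[rule_format, of 2] by auto
    then show ?thesis by (simp add: coord_def Delta_def)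
  qed
  have tt: "theta j t = i" "theta t j = i" "theta j i = t"
    using theta_theta[OF ij] theta_sym by (auto simp: t_def)
  have eps2: "eps_is K r a' b' (k,l)"
    using mode
  proof (elim disjE conjE)
    assume m: "(k,l) = (i,j)" "1 \<le> u" "Wn K r z < Wn K r u"
    show ?thesis unfolding m(1)
      by (rule eps_crit[OF sub ij D' co' YK s'K s'0]) (use m c1 Yi Yj Yt Wn_one in \<open>auto simp: t_def\<close>)
  next
    assume m: "(k,l) = (j,i)" "u \<le> 1" "Wn K r z < Wn K r u"
    have ji: "(j,i) \<in> Ind" using kl m by simp
    show ?thesis unfolding m(1)
      by (rule eps_crit[OF sub ji D' co' YK s'K s'0]) (use m c1 Yi Yj Yt Wn_one tt in \<open>auto simp: t_def\<close>)
  next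
    assume m: "(k,l) = (j, theta i j)" "z \<le> 1" "Wn K r u < 1" "Wn K r u < Wn K r z"
    have jt: "(j,t) \<in> Ind" using kl m by (simp add: t_def)
    show ?thesis unfolding m(1) t_def[symmetric]
      by (rule eps_crit[OF sub jt D' co' YK s'K s'0]) (use m Yi Yj Yt Wn_one tt in auto)
  next
    assume m: "(k,l) = (theta i j, j)" "1 \<le> z" "Wn K r u < 1" "Wn K r u < Wn K r z"
    have tj: "(t,j) \<in> Ind" using kl m by (simp add: t_def)
    show ?thesis unfolding m(1) t_def[symmetric]
      by (rule eps_crit[OF sub tj D' co' YK s'K s'0]) (use m Yi Yj Yt Wn_one tt in auto)
  qed
  show ?thesis using DK eps1 eps2 T by auto
qed



lemma rat_seq: "\<exists>A. (\<forall>n. A n \<in> \<rat>) \<and> A \<longlonglongrightarrow> (a::real)"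
proof -
  have ex: "\<exists>q. q \<in> \<rat> \<and> a - inverse (real (Suc n)) < q \<and> q < a" for n
  proof -
    have "a - inverse (real (Suc n)) < a" by simp
    then obtain q where "q \<in> \<rat>" "a - inverse (real (Suc n)) < q" "q < a"
      using Rats_dense_in_real by blast
    then show ?thesis by blast
  qed
  define A where "A n = (SOME q. q \<in> \<rat> \<and> a - inverse (real (Suc n)) < q \<and> q < a)" for n
  have A: "A n \<in> \<rat> \<and> a - inverse (real (Suc n)) < A n \<and> A n < a" for n
    unfolding A_def by (rule someI_ex[OF ex])
  have l: "(\<lambda>n. a - inverse (real (Suc n))) \<longlonglongrightarrow> a"
    using tendsto_diff[OF tendsto_const LIMSEQ_inverse_real_of_nat, of a] by simp
  have e1: "eventually (\<lambda>n. a - inverse (real (Suc n)) \<le> A n) sequentially"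
    by (intro always_eventually allI) (use A in \<open>auto intro: less_imp_le\<close>)
  have e2: "eventually (\<lambda>n. A n \<le> a) sequentially"
    by (intro always_eventually allI) (use A in \<open>auto intro: less_imp_le\<close>)
  have "A \<longlonglongrightarrow> a" by (rule tendsto_sandwich[OF e1 e2 l tendsto_const])
  then show ?thesis using A by blast
qed

lemma lt_ev: "(f \<longlongrightarrow> (a::real)) F \<Longrightarrow> (g \<longlongrightarrow> b) F \<Longrightarrow> a < b \<Longrightarrow> eventually (\<lambda>n. f n < g n) F"
proof -
  assume f: "(f \<longlongrightarrow> a) F" and g: "(g \<longlongrightarrow> b) F" and ab: "a < b"
  have "((\<lambda>n. g n - f n) \<longlongrightarrow> b - a) F" using tendsto_diff[OF g f] .
  then have "eventually (\<lambda>n. 0 < g n - f n) F" using ab by (intro order_tendstoD(1)) auto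
  then show ?thesis by eventually_elim simp
qed

context cgen
begin

definition ev :: "complex \<Rightarrow> real \<Rightarrow> real \<Rightarrow> real \<Rightarrow> complex" where
  "ev t a b c = of_real a + of_real b * t + of_real c * t^2"
definition VV :: "real \<Rightarrow> real \<Rightarrow> real \<Rightarrow> real" where
  "VV a b c = a + b*e + c*e^2"
definition FF :: "real \<Rightarrow> real \<Rightarrow> real \<Rightarrow> real \<Rightarrow> real" where
  "FF r a b c = VV a b c powr r / cmod (of_real (VV a b c) * ev z1 a b c * ev z2 a b c)"

lemma VV_K: "a \<in> \<rat> \<Longrightarrow> b \<in> \<rat> \<Longrightarrow> c \<in> \<rat> \<Longrightarrow> VV a b c \<in> K"
  using sub_rats[OF sub] sub_facts[OF sub] eK by (simp add: VV_def power2_eq_square)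

lemma Wn_FF: "a \<in> \<rat> \<Longrightarrow> b \<in> \<rat> \<Longrightarrow> c \<in> \<rat> \<Longrightarrow> Wn K r (VV a b c) = FF r a b c"
  unfolding Wn_def FF_def VV_def ev_def using norm_coords by simp

lemma VV_tendsto:
  assumes "A \<longlonglongrightarrow> a" "B \<longlonglongrightarrow> b" "C \<longlonglongrightarrow> c"
  shows "(\<lambda>n. VV (A n) (B n) (C n)) \<longlonglongrightarrow> VV a b c"
  unfolding VV_def using assms by (intro tendsto_intros)

lemma FF_tendsto:
  assumes "A \<longlonglongrightarrow> a" "B \<longlonglongrightarrow> b" "C \<longlonglongrightarrow> c"
    and "VV a b c > 0" "ev z1 a b c \<noteq> 0" "ev z2 a b c \<noteq> 0"
  shows "(\<lambda>n. FF r (A n) (B n) (C n)) \<longlonglongrightarrow> FF r a b c"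
proof -
  have v: "(\<lambda>n. VV (A n) (B n) (C n)) \<longlonglongrightarrow> VV a b c" using VV_tendsto[OF assms(1-3)] .
  have e1: "(\<lambda>n. ev t (A n) (B n) (C n)) \<longlonglongrightarrow> ev t a b c" for t
    unfolding ev_def using assms(1-3) by (intro tendsto_intros)
  have d: "(\<lambda>n. cmod (of_real (VV (A n) (B n) (C n)) * ev z1 (A n) (B n) (C n) * ev z2 (A n) (B n) (C n)))
      \<longlonglongrightarrow> cmod (of_real (VV a b c) * ev z1 a b c * ev z2 a b c)"
    by (intro tendsto_intros v e1)
  have dnz: "cmod (of_real (VV a b c) * ev z1 a b c * ev z2 a b c) \<noteq> 0" using assms(4-6) by simp
  have p: "(\<lambda>n. VV (A n) (B n) (C n) powr r) \<longlonglongrightarrow> VV a b c powr r"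
    using tendsto_powr[OF v tendsto_const] assms(4) by simp
  show ?thesis unfolding FF_def using tendsto_divide[OF p d dnz] .
qed

definition Rc :: real where "Rc = e^2 + pp*e + qq"
definition ta :: "real \<Rightarrow> real \<Rightarrow> real" where "ta v w = w + (v - w) / Rc * qq"
definition tb :: "real \<Rightarrow> real \<Rightarrow> real" where "tb v w = (v - w) / Rc * pp"
definition tc :: "real \<Rightarrow> real \<Rightarrow> real" where "tc v w = (v - w) / Rc"

lemma Rc_nz: "Rc \<noteq> 0" using R_nz by (simp add: Rc_def)

lemma VV_t: "VV (ta v w) (tb v w) (tc v w) = v"
proof -
  have g: "VV (w + k*qq) (k*pp) k = w + k*Rc" for k by (simp add: VV_def Rc_def algebra_simps)
  show ?thesis using g[of "(v - w) / Rc"] Rc_nz by (simp add: ta_def tb_def tc_def)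
qed

lemma ev_t: assumes "t = z1 \<or> t = z2" shows "ev t (ta v w) (tb v w) (tc v w) = of_real w"
proof -
  have q0: "t^2 + of_real pp * t + of_real qq = 0" using quad_factor[of t] assms by auto
  have "ev t (ta v w) (tb v w) (tc v w) = of_real w + of_real ((v - w) / Rc) * (t^2 + of_real pp * t + of_real qq)"
    by (simp add: ev_def ta_def tb_def tc_def algebra_simps)
  then show ?thesis using q0 by simp
qed

lemma t_shift: "ta v w + 1 = ta (v+1) (w+1)" "tb v w = tb (v+1) (w+1)" "tc v w = tc (v+1) (w+1)"
  by (simp_all add: ta_def tb_def tc_def)

lemma FF_t: assumes "v > 0" shows "FF r (ta v w) (tb v w) (tc v w) = v powr r / (v * w^2)"
  unfolding FF_def VV_t using ev_t assms by (simp add: norm_mult power2_eq_square)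

lemma e_irr: "e \<notin> \<rat>"
proof
  assume "e \<in> \<rat>"
  then have "e * 1 + (-1) * e + 0 * e^2 = 0" "(-1::real) \<in> \<rat>" "(0::real) \<in> \<rat>" by auto
  then show False using ind[unfolded Q_lin_indep3_def, rule_format, of e "-1" 0] \<open>e \<in> \<rat>\<close> by auto
qed

lemma exists_gen:
  fixes P :: "real \<Rightarrow> real \<Rightarrow> real \<Rightarrow> real \<Rightarrow> real \<Rightarrow> bool"
  assumes vu: "vu > 0" and vz: "vz > 0" and wu: "wu \<noteq> 0" "wu + 1 \<noteq> 0" and wz: "wz \<noteq> 0"
    and openP: "\<And>X1 X2 X3 X4 X5. X1 \<longlonglongrightarrow> vu \<Longrightarrow> X2 \<longlonglongrightarrow> vz \<Longrightarrow>
        X3 \<longlonglongrightarrow> vu powr r / (vu * wu^2) \<Longrightarrow> X4 \<longlonglongrightarrow> (vu+1) powr r / ((vu+1) * (wu+1)^2) \<Longrightarrow>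
        X5 \<longlonglongrightarrow> vz powr r / (vz * wz^2) \<Longrightarrow>
        eventually (\<lambda>n. P (X1 n) (X2 n) (X3 n) (X4 n) (X5 n)) sequentially"
  shows "\<exists>u z. u \<in> K \<and> z \<in> K \<and> u > 0 \<and> z > 0 \<and> Q_lin_indep3 1 u z \<and>
           P u z (Wn K r u) (Wn K r (1+u)) (Wn K r z)"
proof -
  obtain Au where Au: "\<forall>n. Au n \<in> \<rat>" "Au \<longlonglongrightarrow> ta vu wu" using rat_seq by blast
  obtain Bu where Bu: "\<forall>n. Bu n \<in> \<rat>" "Bu \<longlonglongrightarrow> tb vu wu" using rat_seq by blast
  obtain Cu where Cu: "\<forall>n. Cu n \<in> \<rat>" "Cu \<longlonglongrightarrow> tc vu wu" using rat_seq by blast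
  obtain Az where Az: "\<forall>n. Az n \<in> \<rat>" "Az \<longlonglongrightarrow> ta vz wz" using rat_seq by blast
  obtain Bz where Bz: "\<forall>n. Bz n \<in> \<rat>" "Bz \<longlonglongrightarrow> tb vz wz" using rat_seq by blast
  obtain Cz where Cz: "\<forall>n. Cz n \<in> \<rat>" "Cz \<longlonglongrightarrow> tc vz wz" using rat_seq by blast
  define d where "d n = inverse (real (Suc n))" for n
  have d0: "d \<longlonglongrightarrow> 0" unfolding d_def by (rule LIMSEQ_inverse_real_of_nat)
  have dQ: "d n \<in> \<rat>" "d n > 0" for n by (auto simp: d_def)
  define good where "good \<alpha> \<beta>1 \<beta>2 n \<longleftrightarrow>
     VV (Au n) (Bu n + \<alpha> * d n) (Cu n) > 0 \<and> VV (Az n) (Bz n + \<beta>1 * d n) (Cz n + \<beta>2 * d n) > 0 \<and>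
     P (VV (Au n) (Bu n + \<alpha> * d n) (Cu n)) (VV (Az n) (Bz n + \<beta>1 * d n) (Cz n + \<beta>2 * d n))
       (FF r (Au n) (Bu n + \<alpha> * d n) (Cu n)) (FF r (Au n + 1) (Bu n + \<alpha> * d n) (Cu n))
       (FF r (Az n) (Bz n + \<beta>1 * d n) (Cz n + \<beta>2 * d n))" for \<alpha> \<beta>1 \<beta>2 n
  have evg: "eventually (good \<alpha> \<beta>1 \<beta>2) sequentially" for \<alpha> \<beta>1 \<beta>2
  proof -
    have pert: "(\<lambda>n. X n + c * d n) \<longlonglongrightarrow> x" if "X \<longlonglongrightarrow> x" for X x c
      using tendsto_add[OF that tendsto_mult[OF tendsto_const d0, of c]] by simp
    have Bu': "(\<lambda>n. Bu n + \<alpha> * d n) \<longlonglongrightarrow> tb vu wu" using pert[OF Bu(2)] .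
    have Bz': "(\<lambda>n. Bz n + \<beta>1 * d n) \<longlonglongrightarrow> tb vz wz" using pert[OF Bz(2)] .
    have Cz': "(\<lambda>n. Cz n + \<beta>2 * d n) \<longlonglongrightarrow> tc vz wz" using pert[OF Cz(2)] .
    have Au1: "(\<lambda>n. Au n + 1) \<longlonglongrightarrow> ta (vu+1) (wu+1)"
      using tendsto_add[OF Au(2) tendsto_const, of 1] t_shift by simp
    have X1: "(\<lambda>n. VV (Au n) (Bu n + \<alpha> * d n) (Cu n)) \<longlonglongrightarrow> vu"
      using VV_tendsto[OF Au(2) Bu' Cu(2)] VV_t by simp
    have X2: "(\<lambda>n. VV (Az n) (Bz n + \<beta>1 * d n) (Cz n + \<beta>2 * d n)) \<longlonglongrightarrow> vz"
      using VV_tendsto[OF Az(2) Bz' Cz'] VV_t by simp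
    have X3: "(\<lambda>n. FF r (Au n) (Bu n + \<alpha> * d n) (Cu n)) \<longlonglongrightarrow> vu powr r / (vu * wu^2)"
      using FF_tendsto[OF Au(2) Bu' Cu(2)] VV_t ev_t vu wu FF_t[OF vu] by simp
    have X4: "(\<lambda>n. FF r (Au n + 1) (Bu n + \<alpha> * d n) (Cu n)) \<longlonglongrightarrow> (vu+1) powr r / ((vu+1) * (wu+1)^2)"
    proof -
      have v1: "vu + 1 > 0" using vu by simp
      have cw: "complex_of_real wu + 1 \<noteq> 0" by (metis of_real_1 of_real_add of_real_eq_0_iff wu(2))
      show ?thesis
        using FF_tendsto[OF Au1 Bu'[unfolded t_shift(2)[of vu wu]] Cu(2)[unfolded t_shift(3)[of vu wu]]]
          VV_t ev_t v1 wu cw FF_t[OF v1] by simp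
    qed
    have X5: "(\<lambda>n. FF r (Az n) (Bz n + \<beta>1 * d n) (Cz n + \<beta>2 * d n)) \<longlonglongrightarrow> vz powr r / (vz * wz^2)"
      using FF_tendsto[OF Az(2) Bz' Cz'] VV_t ev_t vz wz FF_t[OF vz] by simp
    have p1: "eventually (\<lambda>n. VV (Au n) (Bu n + \<alpha> * d n) (Cu n) > 0) sequentially"
      using order_tendstoD(1)[OF X1 vu] .
    have p2: "eventually (\<lambda>n. VV (Az n) (Bz n + \<beta>1 * d n) (Cz n + \<beta>2 * d n) > 0) sequentially"
      using order_tendstoD(1)[OF X2 vz] .
    note p3 = openP[OF X1 X2 X3 X4 X5]
    show ?thesis using eventually_conj[OF p1 eventually_conj[OF p2 p3]] unfolding good_def .
  qed
  have "eventually (\<lambda>n. good 0 0 0 n \<and> good 0 1 0 n \<and> good 0 0 1 n \<and> good 1 0 0 n \<and> good 1 1 0 n \<and> good 1 0 1 n) sequentially"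
    by (intro eventually_conj evg)
  then obtain n where gn: "good 0 0 0 n" "good 0 1 0 n" "good 0 0 1 n" "good 1 0 0 n" "good 1 1 0 n" "good 1 0 1 n"
    unfolding eventually_sequentially by blast
  have shiftb: "VV a (b + x) c = VV a b c + x * e" for a b c x by (simp add: VV_def algebra_simps)
  have shiftc: "VV a b (c + x) = VV a b c + x * e^2" for a b c x by (simp add: VV_def algebra_simps)
  obtain \<alpha> where al: "\<alpha> = 0 \<or> \<alpha> = 1" "VV (Au n) (Bu n + \<alpha> * d n) (Cu n) \<notin> \<rat>"
  proof (cases "VV (Au n) (Bu n) (Cu n) \<in> \<rat>")
    case True
    have "VV (Au n) (Bu n + 1 * d n) (Cu n) \<notin> \<rat>"
    proof
      assume h: "VV (Au n) (Bu n + 1 * d n) (Cu n) \<in> \<rat>"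
      have "e = (VV (Au n) (Bu n + 1 * d n) (Cu n) - VV (Au n) (Bu n) (Cu n)) / d n"
        using dQ(2)[of n] by (simp add: shiftb)
      moreover have "(VV (Au n) (Bu n + 1 * d n) (Cu n) - VV (Au n) (Bu n) (Cu n)) / d n \<in> \<rat>"
        using h True dQ(1)[of n] by (intro Rats_divide Rats_diff) auto
      ultimately have "e \<in> \<rat>" by simp
      then show False using e_irr by simp
    qed
    then show ?thesis using that by blast
  next
    case False then show ?thesis using that[of 0] by simp
  qed
  define u where "u = VV (Au n) (Bu n + \<alpha> * d n) (Cu n)"
  have uQ: "u \<notin> \<rat>" using al by (simp add: u_def)
  define zz where "zz \<beta>1 \<beta>2 = VV (Az n) (Bz n + \<beta>1 * d n) (Cz n + \<beta>2 * d n)" for \<beta>1 \<beta>2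
  define span where "span x \<longleftrightarrow> (\<exists>p\<in>\<rat>. \<exists>q\<in>\<rat>. x = p + q * u)" for x
  have notall: "\<not> (span (zz 0 0) \<and> span (zz 1 0) \<and> span (zz 0 1))"
  proof
    assume h: "span (zz 0 0) \<and> span (zz 1 0) \<and> span (zz 0 1)"
    then obtain p0 q0 p1 q1 p2 q2 where pq: "p0\<in>\<rat>" "q0\<in>\<rat>" "p1\<in>\<rat>" "q1\<in>\<rat>" "p2\<in>\<rat>" "q2\<in>\<rat>"
      "zz 0 0 = p0 + q0 * u" "zz 1 0 = p1 + q1 * u" "zz 0 1 = p2 + q2 * u"
      unfolding span_def by metis
    have z10: "zz 1 0 = zz 0 0 + d n * e" and z01: "zz 0 1 = zz 0 0 + d n * e^2"
      by (simp_all add: zz_def shiftb shiftc)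
    define s1 where "s1 = (p1 - p0) / d n"
    define t1 where "t1 = (q1 - q0) / d n"
    define s2 where "s2 = (p2 - p0) / d n"
    define t2 where "t2 = (q2 - q0) / d n"
    have dn: "d n \<noteq> 0" using dQ(2)[of n] by simp
    have E1: "e = s1 + t1 * u"
    proof -
      have "d n * e = (p1 - p0) + (q1 - q0) * u" using z10 pq(7,8) by (simp add: algebra_simps)
      then have "e = ((p1 - p0) + (q1 - q0) * u) / d n" using dn by (simp add: eq_divide_eq mult.commute)
      then show ?thesis by (simp add: s1_def t1_def add_divide_distrib)
    qed
    have E2: "e^2 = s2 + t2 * u"
    proof -
      have "d n * e^2 = (p2 - p0) + (q2 - q0) * u" using z01 pq(7,9) by (simp add: algebra_simps)
      then have "e^2 = ((p2 - p0) + (q2 - q0) * u) / d n" using dn by (simp add: eq_divide_eq mult.commute)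
      then show ?thesis by (simp add: s2_def t2_def add_divide_distrib)
    qed
    have stQ: "s1 \<in> \<rat>" "t1 \<in> \<rat>" "s2 \<in> \<rat>" "t2 \<in> \<rat>"
      using pq dQ(1)[of n] by (auto simp: s1_def t1_def s2_def t2_def)
    show False
    proof (cases "t1 = 0")
      case True then show False using E1 stQ e_irr by simp
    next
      case False
      have tu: "t1 * u = e - s1" using E1 by simp
      have "t1 * e^2 = t1 * (s2 + t2*u)" using E2 by simp
      also have "\<dots> = t1*s2 + t2*(t1*u)" by (simp add: algebra_simps)
      also have "\<dots> = t1*s2 + t2*(e - s1)" using tu by simp
      finally have te: "t1 * e^2 = t1*s2 + t2*(e - s1)" .
      have "t1 * ((t2 * s1 / t1 - s2) + (- t2 / t1) * e + 1 * e^2) = t2*s1 - t1*s2 - t2*e + t1*e^2"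
        using False by (simp add: field_simps)
      also have "\<dots> = 0" using te by (simp add: algebra_simps)
      finally have "(t2 * s1 / t1 - s2) + (- t2 / t1) * e + 1 * e^2 = 0" using False by simp
      moreover have "(t2 * s1 / t1 - s2) + (- t2 / t1) * e + 1 * e^2 \<noteq> 0"
        by (rule quad_nz) (use stQ in auto)
      ultimately show False by simp
    qed
  qed
  obtain \<beta>1 \<beta>2 where be: "(\<beta>1 = 0 \<and> \<beta>2 = 0) \<or> (\<beta>1 = 1 \<and> \<beta>2 = 0) \<or> (\<beta>1 = 0 \<and> \<beta>2 = 1)"
     "\<not> span (zz \<beta>1 \<beta>2)"
    using notall by blast
  define z where "z = zz \<beta>1 \<beta>2"
  have g: "good \<alpha> \<beta>1 \<beta>2 n" using gn al(1) be(1) by auto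
  have coQ: "Au n \<in> \<rat>" "Bu n + \<alpha> * d n \<in> \<rat>" "Cu n \<in> \<rat>"
    "Az n \<in> \<rat>" "Bz n + \<beta>1 * d n \<in> \<rat>" "Cz n + \<beta>2 * d n \<in> \<rat>" "Au n + 1 \<in> \<rat>"
    using Au(1) Bu(1) Cu(1) Az(1) Bz(1) Cz(1) dQ(1)[of n] al(1) be(1) by auto
  have uK: "u \<in> K" using VV_K coQ by (simp add: u_def)
  have zK: "z \<in> K" using VV_K coQ by (simp add: z_def zz_def)
  have Wu: "Wn K r u = FF r (Au n) (Bu n + \<alpha> * d n) (Cu n)" using Wn_FF coQ by (simp add: u_def)
  have Wu1: "Wn K r (1 + u) = FF r (Au n + 1) (Bu n + \<alpha> * d n) (Cu n)"
  proof -
    have "1 + u = VV (Au n + 1) (Bu n + \<alpha> * d n) (Cu n)" by (simp add: u_def VV_def)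
    then show ?thesis using Wn_FF coQ by simp
  qed
  have Wz: "Wn K r z = FF r (Az n) (Bz n + \<beta>1 * d n) (Cz n + \<beta>2 * d n)"
    using Wn_FF coQ by (simp add: z_def zz_def)
  have indep: "Q_lin_indep3 1 u z"
    unfolding Q_lin_indep3_def
  proof (intro ballI impI)
    fix x y w assume q: "x \<in> \<rat>" "y \<in> \<rat>" "w \<in> \<rat>" and h: "x * 1 + y * u + w * z = 0"
    have w0: "w = 0"
    proof (rule ccontr)
      assume w: "w \<noteq> 0"
      then have "z = (- x / w) + (- y / w) * u" using h by (simp add: field_simps)
      moreover have "- x / w \<in> \<rat>" "- y / w \<in> \<rat>" using q by auto
      ultimately have "span z" unfolding span_def by blast
      then show False using be(2) by (simp add: z_def)
    qed
    have y0: "y = 0"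
    proof (rule ccontr)
      assume y: "y \<noteq> 0"
      then have "u = - x / y" using h w0 by (simp add: field_simps)
      then show False using uQ q by simp
    qed
    show "x = 0 \<and> y = 0 \<and> w = 0" using h w0 y0 by simp
  qed
  have gg: "u > 0 \<and> z > 0 \<and> P u z (FF r (Au n) (Bu n + \<alpha> * d n) (Cu n))
      (FF r (Au n + 1) (Bu n + \<alpha> * d n) (Cu n)) (FF r (Az n) (Bz n + \<beta>1 * d n) (Cz n + \<beta>2 * d n))"
    using g unfolding good_def u_def z_def zz_def by simp
  then have "u \<in> K \<and> z \<in> K \<and> u > 0 \<and> z > 0 \<and> Q_lin_indep3 1 u z \<and>
           P u z (Wn K r u) (Wn K r (1+u)) (Wn K r z)"
    using uK zK indep unfolding Wu Wu1 Wz by simp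
  then show ?thesis by blast
qed

end


context cgen
begin

lemma modeA:
  fixes r vu :: real
  assumes r: "r > 0" and vu: "vu > 0"
  shows "\<exists>u z. u \<in> K \<and> z \<in> K \<and> u > 0 \<and> z > 0 \<and> Q_lin_indep3 1 u z \<and>
     (Wn K r z < Wn K r (1+u) \<and> Wn K r z < 1 \<and> Wn K r z < Wn K r u \<and>
      (vu > 1 \<longrightarrow> 1 < u) \<and> (vu < 1 \<longrightarrow> u < 1))"
proof -
  define A where "A = vu powr r / (vu * 1^2)"
  define B where "B = (vu+1) powr r / ((vu+1) * (1+1)^2)"
  define m where "m = min 1 (min A B)"
  have Ap: "A > 0" "B > 0" using vu by (auto simp: A_def B_def)
  have mp: "m > 0" using Ap by (simp add: m_def)
  define wz where "wz = 1 + 1/m"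
  have wz1: "wz > 1" "wz > 1/m" using mp by (auto simp: wz_def)
  have "wz^2 > 1/m"
  proof -
    have ww: "wz * wz > 1 * wz" using wz1 by (intro mult_strict_right_mono) auto
    show ?thesis using ww wz1 unfolding power2_eq_square by linarith
  qed
  then have wm: "1 / wz^2 < m" using mp wz1 by (simp add: field_simps)
  have wz0: "wz \<noteq> 0" using wz1 by simp
  let ?P = "\<lambda>X1 X2 X3 X4 X5. X5 < X4 \<and> X5 < 1 \<and> X5 < X3 \<and> (vu > 1 \<longrightarrow> 1 < X1) \<and> (vu < 1 \<longrightarrow> X1 < (1::real))"
  have "\<exists>u z. u \<in> K \<and> z \<in> K \<and> u > 0 \<and> z > 0 \<and> Q_lin_indep3 1 u z \<and>
           ?P u z (Wn K r u) (Wn K r (1+u)) (Wn K r z)"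
  proof (rule exists_gen[of vu 1 1 wz])
    fix X1 X2 X3 X4 X5 :: "nat \<Rightarrow> real"
    assume X1: "X1 \<longlonglongrightarrow> vu" and X3: "X3 \<longlonglongrightarrow> vu powr r / (vu * 1^2)"
      and X4: "X4 \<longlonglongrightarrow> (vu+1) powr r / ((vu+1) * (1+1)^2)"
      and X5: "X5 \<longlonglongrightarrow> 1 powr r / (1 * wz^2)"
    have X5': "X5 \<longlonglongrightarrow> 1 / wz^2" using X5 by simp
    have e1: "eventually (\<lambda>n. X5 n < X4 n) sequentially"
      using lt_ev[OF X5' X4] wm by (simp add: m_def B_def)
    have e2: "eventually (\<lambda>n. X5 n < 1) sequentially"
      using lt_ev[OF X5' tendsto_const] wm by (simp add: m_def)
    have e3: "eventually (\<lambda>n. X5 n < X3 n) sequentially"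
      using lt_ev[OF X5' X3] wm by (simp add: m_def A_def)
    have e4: "eventually (\<lambda>n. vu > 1 \<longrightarrow> 1 < X1 n) sequentially"
    proof (cases "vu > 1")
      case True then show ?thesis using order_tendstoD(1)[OF X1 True] by simp
    qed simp
    have e5: "eventually (\<lambda>n. vu < 1 \<longrightarrow> X1 n < 1) sequentially"
    proof (cases "vu < 1")
      case True then show ?thesis using order_tendstoD(2)[OF X1 True] by simp
    qed simp
    show "eventually (\<lambda>n. ?P (X1 n) (X2 n) (X3 n) (X4 n) (X5 n)) sequentially"
      using e1 e2 e3 e4 e5 by eventually_elim auto
  qed (use vu wz0 in auto)
  then show ?thesis by blast
qed

lemma modeB:
  fixes r vz :: real
  assumes r: "r > 0" and vz: "vz > 0"
  shows "\<exists>u z. u \<in> K \<and> z \<in> K \<and> u > 0 \<and> z > 0 \<and> Q_lin_indep3 1 u z \<and>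
     (Wn K r z < Wn K r (1+u) \<and> Wn K r z < 1 \<and> Wn K r u < 1 \<and> Wn K r u < Wn K r z \<and>
      (vz > 1 \<longrightarrow> 1 < z) \<and> (vz < 1 \<longrightarrow> z < 1))"
proof -
  define wz where "wz = sqrt (2 * vz powr r / vz)"
  have wq: "wz^2 = 2 * vz powr r / vz" using vz by (simp add: wz_def)
  have wz0: "wz \<noteq> 0" using vz by (simp add: wz_def)
  have Z: "vz powr r / (vz * wz^2) = 1/2" using vz unfolding wq by (simp add: field_simps)
  have U: "1 powr r / (1 * (-2)^2) = (1/4::real)" by simp
  have U1: "(1 + 1) powr r / ((1 + 1) * (-2 + 1)^2) = (2::real) powr r / 2" by simp
  have two: "(2::real) powr r > 1" using r by simp
  let ?P = "\<lambda>X1 X2 X3 X4 X5. X5 < X4 \<and> X5 < 1 \<and> X3 < 1 \<and> X3 < X5 \<and> (vz > 1 \<longrightarrow> 1 < X2) \<and> (vz < 1 \<longrightarrow> X2 < (1::real))"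
  have "\<exists>u z. u \<in> K \<and> z \<in> K \<and> u > 0 \<and> z > 0 \<and> Q_lin_indep3 1 u z \<and>
           ?P u z (Wn K r u) (Wn K r (1+u)) (Wn K r z)"
  proof (rule exists_gen[of 1 vz "-2" wz])
    fix X1 X2 X3 X4 X5 :: "nat \<Rightarrow> real"
    assume X2: "X2 \<longlonglongrightarrow> vz" and X3: "X3 \<longlonglongrightarrow> 1 powr r / (1 * (-2)^2)"
      and X4: "X4 \<longlonglongrightarrow> (1+1) powr r / ((1+1) * (-2+1)^2)"
      and X5: "X5 \<longlonglongrightarrow> vz powr r / (vz * wz^2)"
    have X3': "X3 \<longlonglongrightarrow> 1/4" using X3 U by simp
    have X4': "X4 \<longlonglongrightarrow> 2 powr r / 2" using X4 U1 by simp
    have X5': "X5 \<longlonglongrightarrow> 1/2" using X5 Z by simp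
    have e1: "eventually (\<lambda>n. X5 n < X4 n) sequentially"
      using lt_ev[OF X5' X4'] two by simp
    have e2: "eventually (\<lambda>n. X5 n < 1) sequentially"
      using lt_ev[OF X5' tendsto_const] by simp
    have e3: "eventually (\<lambda>n. X3 n < 1) sequentially"
      using lt_ev[OF X3' tendsto_const] by simp
    have e3': "eventually (\<lambda>n. X3 n < X5 n) sequentially"
      using lt_ev[OF X3' X5'] by simp
    have e4: "eventually (\<lambda>n. vz > 1 \<longrightarrow> 1 < X2 n) sequentially"
    proof (cases "vz > 1")
      case True then show ?thesis using order_tendstoD(1)[OF X2 True] by simp
    qed simp
    have e5: "eventually (\<lambda>n. vz < 1 \<longrightarrow> X2 n < 1) sequentially"
    proof (cases "vz < 1")
      case True then show ?thesis using order_tendstoD(2)[OF X2 True] by simp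
    qed simp
    show "eventually (\<lambda>n. ?P (X1 n) (X2 n) (X3 n) (X4 n) (X5 n)) sequentially"
      using e1 e2 e3 e3' e4 e5 by eventually_elim auto
  qed (use vz wz0 in auto)
  then show ?thesis by blast
qed

end

theorem theorem2p7:
  fixes K :: "real set" and p q :: nat and i j k l :: nat
  assumes "real_cubic_field K"
    and "p > 0" and "q > 0" and "coprime p q" and "\<not> 3 dvd p"
    and "(i, j) \<in> Ind" and "(k, l) \<in> Ind"
    and "(k, l) \<noteq> (i, theta i j)" and "(k, l) \<noteq> (theta i j, i)"
  shows "\<exists>(a, b)\<in>Delta_K K.
           eps_is K (real p / real q) a b (i, j) \<and>
           (case Tmap (i, j) (a, b) of (a', b') \<Rightarrow> eps_is K (real p / real q) a' b' (k, l))"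
proof -
  obtain e a0 b0 c0 where cg: "cgen K e a0 b0 c0" using cgen_exists[OF assms(1)] by blast
  define r where "r = real p / real q"
  have r: "r > 0" using assms(2,3) by (simp add: r_def)
  have sub: "subfield_real K" using assms(1) by (rule cubic_sub)
  note asm = assemble[OF sub assms(6) assms(7), where r = r]
  have mc: "(k,l) = (i,j) \<or> (k,l) = (j,i) \<or> (k,l) = (j, theta i j) \<or> (k,l) = (theta i j, j)"
    using mode_cases[OF assms(6,7,8,9)] .
  have "\<exists>(a, b)\<in>Delta_K K. eps_is K r a b (i, j) \<and>
           (case Tmap (i, j) (a, b) of (a', b') \<Rightarrow> eps_is K r a' b' (k, l))"
    using mc
  proof (elim disjE)
    assume m: "(k,l) = (i,j)"
    obtain u z where uz: "u \<in> K" "z \<in> K" "u > 0" "z > 0" "Q_lin_indep3 1 u z"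
      "Wn K r z < Wn K r (1+u)" "Wn K r z < 1" "Wn K r z < Wn K r u" "1 < u"
      using cgen.modeA[OF cg r, of 2] by auto
    show ?thesis by (rule asm[OF uz(1-7)]) (use m uz in auto)
  next
    assume m: "(k,l) = (j,i)"
    obtain u z where uz: "u \<in> K" "z \<in> K" "u > 0" "z > 0" "Q_lin_indep3 1 u z"
      "Wn K r z < Wn K r (1+u)" "Wn K r z < 1" "Wn K r z < Wn K r u" "u < 1"
      using cgen.modeA[OF cg r, of "1/2"] by auto
    show ?thesis by (rule asm[OF uz(1-7)]) (use m uz in auto)
  next
    assume m: "(k,l) = (j, theta i j)"
    obtain u z where uz: "u \<in> K" "z \<in> K" "u > 0" "z > 0" "Q_lin_indep3 1 u z"
      "Wn K r z < Wn K r (1+u)" "Wn K r z < 1" "Wn K r u < 1" "Wn K r u < Wn K r z" "z < 1"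
      using cgen.modeB[OF cg r, of "1/2"] by auto
    show ?thesis by (rule asm[OF uz(1-7)]) (use m uz in auto)
  next
    assume m: "(k,l) = (theta i j, j)"
    obtain u z where uz: "u \<in> K" "z \<in> K" "u > 0" "z > 0" "Q_lin_indep3 1 u z"
      "Wn K r z < Wn K r (1+u)" "Wn K r z < 1" "Wn K r u < 1" "Wn K r u < Wn K r z" "1 < z"
      using cgen.modeB[OF cg r, of 2] by auto
    show ?thesis by (rule asm[OF uz(1-7)]) (use m uz in auto)
  qed
  then show ?thesis by (simp add: r_def)
qed


end
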